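(* For bivariate copulas $D,E$, the following are equivalent: (i) $D\le_{\partial_2S}E$; (ii) $\mathcal{T}(D)\ge_{lo}\mathcal{T}(E)$; (iii) $\mathcal{T}(D)\ge_{\partial_2S}\mathcal{T}(E)$; (iv) $\mathcal{T}^2(D)\le_{lo}\mathcal{T}^2(E)$; (v) $\mathcal{T}^2(D)\le_{\partial_2S}\mathcal{T}^2(E)$.
   Context: $\Pi(u,v)=uv$; $\partial_2$ the partial derivative in the second argument; $D\vee E(u,v):=\int_0^1\min\{\partial_2D(u,t),\partial_2E(v,t)\}\,dt$; $\mathcal{T}(C):=C\vee\Pi$, $\mathcal{T}^2=\mathcal{T}\circ\mathcal{T}$. $D\le_{lo}E$ means $D(u,v)\le E(u,v)$ for all $(u,v)\in[0,1]^2$. For measurable $f:(0,1)\to[0,1]$, $f^*$ is the a.e.-unique decreasing function with $\lambda(f^*\le y)=\lambda(f\le y)$ for all $y$; $f\prec_S g$ means $\int_0^vf^*(t)\,dt\le\int_0^vg^*(t)\,dt$ for all $v\in(0,1)$ with equality for $v=1$. $D\le_{\partial_2S}E$ means $\partial_2D(v,\cdot)\prec_S\partial_2E(v,\cdot)$ for all $v\in(0,1)$. *)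

theory Defs
  imports "HOL-Analysis.Analysis"
begin

text \<open>Bivariate copulas, represented as functions real => real => real; only the
values on the unit square are constrained.\<close>
definition copula :: "(real \<Rightarrow> real \<Rightarrow> real) \<Rightarrow> bool" where
  "copula C \<longleftrightarrow>
     (\<forall>u\<in>{0..1}. C u 0 = 0 \<and> C 0 u = 0 \<and> C u 1 = u \<and> C 1 u = u) \<and>
     (\<forall>u1 u2 v1 v2. 0 \<le> u1 \<longrightarrow> u1 \<le> u2 \<longrightarrow> u2 \<le> 1 \<longrightarrow> 0 \<le> v1 \<longrightarrow> v1 \<le> v2 \<longrightarrow> v2 \<le> 1 \<longrightarrow>
        C u1 v1 + C u2 v2 - C u1 v2 - C u2 v1 \<ge> 0)"

definition Pi_cop :: "real \<Rightarrow> real \<Rightarrow> real" where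
  "Pi_cop u v = u * v"

text \<open>Partial derivative in the second argument; set to 0 where it does not exist
  (a Lebesgue null set for copulas, so irrelevant for all integrals below).\<close>
definition partial2 :: "(real \<Rightarrow> real \<Rightarrow> real) \<Rightarrow> real \<Rightarrow> real \<Rightarrow> real" where
  "partial2 C u t = (if (\<lambda>s. C u s) differentiable (at t) then deriv (\<lambda>s. C u s) t else 0)"

definition join :: "(real \<Rightarrow> real \<Rightarrow> real) \<Rightarrow> (real \<Rightarrow> real \<Rightarrow> real) \<Rightarrow> real \<Rightarrow> real \<Rightarrow> real" where
  "join D E u v = (LINT t|lebesgue_on {0..1}. min (partial2 D u t) (partial2 E v t))"

definition Top :: "(real \<Rightarrow> real \<Rightarrow> real) \<Rightarrow> real \<Rightarrow> real \<Rightarrow> real" where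
  "Top C = join C Pi_cop"

definition le_lo :: "(real \<Rightarrow> real \<Rightarrow> real) \<Rightarrow> (real \<Rightarrow> real \<Rightarrow> real) \<Rightarrow> bool" where
  "le_lo D E \<longleftrightarrow> (\<forall>u\<in>{0..1}. \<forall>v\<in>{0..1}. D u v \<le> E u v)"

text \<open>Decreasing rearrangement: some (a.e.-unique) decreasing function on (0,1)
  equimeasurable with f.\<close>
definition is_decr_rearr :: "(real \<Rightarrow> real) \<Rightarrow> (real \<Rightarrow> real) \<Rightarrow> bool" where
  "is_decr_rearr f g \<longleftrightarrow>
     (\<forall>s t. 0 < s \<longrightarrow> s \<le> t \<longrightarrow> t < 1 \<longrightarrow> g t \<le> g s) \<and>
     (\<forall>y. emeasure lebesgue {t\<in>{0<..<1}. g t \<le> y} = emeasure lebesgue {t\<in>{0<..<1}. f t \<le> y})"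

definition decr_rearr :: "(real \<Rightarrow> real) \<Rightarrow> real \<Rightarrow> real" where
  "decr_rearr f = (SOME g. is_decr_rearr f g)"

definition schur_le :: "(real \<Rightarrow> real) \<Rightarrow> (real \<Rightarrow> real) \<Rightarrow> bool" where
  "schur_le f g \<longleftrightarrow>
     (\<forall>v\<in>{0<..<1}. (LINT t|lebesgue_on {0..v}. decr_rearr f t) \<le> (LINT t|lebesgue_on {0..v}. decr_rearr g t)) \<and>
     (LINT t|lebesgue_on {0..1}. decr_rearr f t) = (LINT t|lebesgue_on {0..1}. decr_rearr g t)"

definition le_d2S :: "(real \<Rightarrow> real \<Rightarrow> real) \<Rightarrow> (real \<Rightarrow> real \<Rightarrow> real) \<Rightarrow> bool" where
  "le_d2S D E \<longleftrightarrow> (\<forall>v\<in>{0<..<1}. schur_le (partial2 D v) (partial2 E v))"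

end

theory Submission
  imports Defs "HOL-Probability.Probability"
begin

definition lipmono :: "(real \<Rightarrow> real) \<Rightarrow> bool" where
  "lipmono F \<longleftrightarrow> (\<forall>x y. x \<le> y \<longrightarrow> F x \<le> F y \<and> F y - F x \<le> y - x)"

definition lowpt :: "(real \<Rightarrow> real) \<Rightarrow> real \<Rightarrow> real \<Rightarrow> bool" where
  "lowpt F p x \<longleftrightarrow> (\<forall>d>0. \<exists>a b. a < x \<and> x < b \<and> b - a < d \<and> F b - F a < p * (b - a))"

definition highpt :: "(real \<Rightarrow> real) \<Rightarrow> real \<Rightarrow> real \<Rightarrow> bool" where
  "highpt F q x \<longleftrightarrow> (\<forall>d>0. \<exists>a b. a < x \<and> x < b \<and> b - a < d \<and> F b - F a > q * (b - a))"

lemma lipmonoD: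
  assumes "lipmono F" "x \<le> y" shows "F x \<le> F y" "F y - F x \<le> y - x"
  using assms unfolding lipmono_def by auto

lemma lipmono_quot:
  assumes "lipmono F" "h \<noteq> 0"
  shows "0 \<le> (F (x + h) - F x) / h" "(F (x + h) - F x) / h \<le> 1"
proof -
  have "0 \<le> (F (x + h) - F x) / h \<and> (F (x + h) - F x) / h \<le> 1"
  proof (cases "h > 0")
    case True
    then have "F x \<le> F (x+h)" "F (x+h) - F x \<le> h" using lipmonoD[OF assms(1), of x "x+h"] by auto
    then show ?thesis using True by (auto simp: divide_simps)
  next
    case False
    then have h: "h < 0" using assms(2) by auto
    then have "F (x+h) \<le> F x" "F x - F (x+h) \<le> -h" using lipmonoD[OF assms(1), of "x+h" x] by auto
    then show ?thesis using h by (auto simp: divide_simps)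
  qed
  then show "0 \<le> (F (x + h) - F x) / h" "(F (x + h) - F x) / h \<le> 1" by auto
qed

lemma lowpt_from_freq:
  assumes F: "lipmono F" and fr: "frequently (\<lambda>h. (F (x + h) - F x) / h < p) (at 0)"
  shows "lowpt F p x"
  unfolding lowpt_def
proof (intro allI impI)
  fix d :: real assume d: "d > 0"
  from fr have "\<not> eventually (\<lambda>h. \<not> (F (x + h) - F x) / h < p) (at 0)"
    by (simp add: frequently_def)
  then have "\<not> (\<forall>h. h \<noteq> 0 \<and> dist h 0 < d/2 \<longrightarrow> \<not> (F (x + h) - F x) / h < p)"
    using d unfolding eventually_at by (metis half_gt_zero)
  then obtain h where h: "h \<noteq> 0" "\<bar>h\<bar> < d/2" "(F (x + h) - F x) / h < p" by auto
  have p: "p > 0" using lipmono_quot[OF F h(1), of x] h(3) by linarith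
  show "\<exists>a b. a < x \<and> x < b \<and> b - a < d \<and> F b - F a < p * (b - a)"
  proof (cases "h > 0")
    case True
    define gap where "gap = p * h - (F (x+h) - F x)"
    have gap: "gap > 0" using h(3) True by (simp add: gap_def divide_simps)
    define e where "e = min (d/2) (gap/2)"
    have e: "e > 0" "e \<le> d/2" "e \<le> gap/2" using d gap by (auto simp: e_def)
    have l: "F x - F (x - e) \<le> e" using lipmonoD(2)[OF F, of "x-e" x] e by auto
    have "e * (1 - p) < gap"
    proof (cases "p \<le> 1")
      case True then have "e * (1-p) \<le> e" using e p by (simp add: mult_left_le)
      then show ?thesis using e gap by linarith
    next
      case False then have "e * (1-p) < 0" using e by (simp add: mult_pos_neg)
      then show ?thesis using gap by linarith
    qed
    then have "F (x+h) - F (x - e) < p * ((x+h) - (x - e))"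
      using l unfolding gap_def by (simp add: algebra_simps)
    moreover have "(x+h) - (x-e) < d" using h(2) e True by auto
    ultimately show ?thesis using True e by (intro exI[of _ "x - e"] exI[of _ "x + h"]) auto
  next
    case False
    then have hn: "h < 0" using h(1) by auto
    define gap where "gap = p * (-h) - (F x - F (x+h))"
    have gap: "gap > 0" using h(3) hn by (simp add: gap_def divide_simps)
    define e where "e = min (d/2) (gap/2)"
    have e: "e > 0" "e \<le> d/2" "e \<le> gap/2" using d gap by (auto simp: e_def)
    have l: "F (x + e) - F x \<le> e" using lipmonoD(2)[OF F, of x "x+e"] e by auto
    have "e * (1 - p) < gap"
    proof (cases "p \<le> 1")
      case True then have "e * (1-p) \<le> e" using e p by (simp add: mult_left_le)
      then show ?thesis using e gap by linarith
    next
      case False then have "e * (1-p) < 0" using e by (simp add: mult_pos_neg)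
      then show ?thesis using gap by linarith
    qed
    then have "F (x+e) - F (x + h) < p * ((x+e) - (x + h))"
      using l unfolding gap_def by (simp add: algebra_simps)
    moreover have "(x+e) - (x+h) < d" using h(2) e hn by auto
    ultimately show ?thesis using hn e by (intro exI[of _ "x + h"] exI[of _ "x + e"]) auto
  qed
qed

lemma highpt_from_freq:
  assumes F: "lipmono F" and q: "q > 0" and fr: "frequently (\<lambda>h. (F (x + h) - F x) / h > q) (at 0)"
  shows "highpt F q x"
  unfolding highpt_def
proof (intro allI impI)
  fix d :: real assume d: "d > 0"
  from fr have "\<not> eventually (\<lambda>h. \<not> (F (x + h) - F x) / h > q) (at 0)"
    by (simp add: frequently_def)
  then have "\<not> (\<forall>h. h \<noteq> 0 \<and> dist h 0 < d/2 \<longrightarrow> \<not> (F (x + h) - F x) / h > q)"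
    using d unfolding eventually_at by (metis half_gt_zero)
  then obtain h where h: "h \<noteq> 0" "\<bar>h\<bar> < d/2" "(F (x + h) - F x) / h > q" by auto
  show "\<exists>a b. a < x \<and> x < b \<and> b - a < d \<and> F b - F a > q * (b - a)"
  proof (cases "h > 0")
    case True
    define gap where "gap = (F (x+h) - F x) - q * h"
    have gap: "gap > 0" using h(3) True by (simp add: gap_def divide_simps)
    define e where "e = min (d/2) (gap/(2*q))"
    have e: "e > 0" "e \<le> d/2" "e \<le> gap/(2*q)" using d gap q by (auto simp: e_def)
    have l: "F (x - e) \<le> F x" using lipmonoD(1)[OF F, of "x-e" x] e by auto
    have "q * e < gap" using e(3) q gap by (simp add: field_simps)
    then have "F (x+h) - F (x - e) > q * ((x+h) - (x - e))"
      using l unfolding gap_def by (simp add: algebra_simps)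
    moreover have "(x+h) - (x-e) < d" using h(2) e True by auto
    ultimately show ?thesis using True e by (intro exI[of _ "x - e"] exI[of _ "x + h"]) auto
  next
    case False
    then have hn: "h < 0" using h(1) by auto
    define gap where "gap = (F x - F (x+h)) - q * (-h)"
    have gap: "gap > 0" using h(3) hn by (simp add: gap_def divide_simps)
    define e where "e = min (d/2) (gap/(2*q))"
    have e: "e > 0" "e \<le> d/2" "e \<le> gap/(2*q)" using d gap q by (auto simp: e_def)
    have l: "F x \<le> F (x + e)" using lipmonoD(1)[OF F, of x "x+e"] e by auto
    have "q * e < gap" using e(3) q gap by (simp add: field_simps)
    then have "F (x+e) - F (x + h) > q * ((x+e) - (x + h))"
      using l unfolding gap_def by (simp add: algebra_simps)
    moreover have "(x+e) - (x+h) < d" using h(2) e hn by auto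
    ultimately show ?thesis using hn e by (intro exI[of _ "x + h"] exI[of _ "x + e"]) auto
  qed
qed

lemma nondiff_bad:
  assumes F: "lipmono F" and nd: "\<not> F differentiable (at x)"
  shows "\<exists>p\<in>\<rat>. \<exists>q\<in>\<rat>. 0 < p \<and> p < q \<and> lowpt F p x \<and> highpt F q x"
proof -
  define Q where "Q h = (F (x + h) - F x) / h" for h
  have Qb: "eventually (\<lambda>h. 0 \<le> Q h \<and> Q h \<le> 1) (at (0::real))"
    unfolding eventually_at using lipmono_quot[OF F] Q_def by (auto intro!: exI[of _ 1])
  define L where "L = Liminf (at (0::real)) (\<lambda>h. ereal (Q h))"
  define U where "U = Limsup (at (0::real)) (\<lambda>h. ereal (Q h))"
  have LU: "L \<le> U" unfolding L_def U_def by (rule Liminf_le_Limsup) simp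
  have L0: "0 \<le> L" unfolding L_def le_Liminf_iff
    using Qb by (auto elim!: eventually_mono intro: less_le_trans[of _ 0])
  have U1: "U \<le> 1" unfolding U_def Limsup_le_iff
    using Qb by (auto elim!: eventually_mono simp: one_ereal_def intro: le_less_trans[of _ "ereal 1"])
  show ?thesis
  proof (cases "L = U")
    case True
    then have lim: "((\<lambda>h. ereal (Q h)) \<longlongrightarrow> L) (at 0)"
      unfolding L_def U_def by (intro Liminf_eq_Limsup) auto
    obtain c where c: "L = ereal c" using L0 LU U1 by (cases L) auto
    have "(Q \<longlongrightarrow> c) (at 0)" using lim c by simp
    then have "(F has_field_derivative c) (at x)" unfolding DERIV_def Q_def .
    then have "F differentiable (at x)" using real_differentiable_def by blast
    with nd show ?thesis by simp
  next
    case False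
    then have LU': "L < U" using LU by simp
    obtain l where l: "L = ereal l" using L0 LU U1 by (cases L) auto
    obtain u where u: "U = ereal u" using L0 LU U1 by (cases U) auto
    have lu: "l < u" "0 \<le> l" using LU' L0 l u by auto
    obtain p where p: "p \<in> \<rat>" "l < p" "p < (l+u)/2" using Rats_dense_in_real[of l "(l+u)/2"] lu by auto
    obtain q where q: "q \<in> \<rat>" "(l+u)/2 < q" "q < u" using Rats_dense_in_real[of "(l+u)/2" u] lu by auto
    have "\<not> ereal p \<le> L" using p l by simp
    then obtain y where y: "y < ereal p" "\<not> eventually (\<lambda>h. y < ereal (Q h)) (at 0)"
      unfolding L_def le_Liminf_iff by auto
    have "frequently (\<lambda>h. Q h < p) (at 0)"
      unfolding frequently_def
    proof
      assume "eventually (\<lambda>h. \<not> Q h < p) (at 0)"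
      then have "eventually (\<lambda>h. y < ereal (Q h)) (at 0)"
        by (rule eventually_mono) (use y(1) in \<open>auto simp: not_less intro: less_le_trans\<close>)
      with y(2) show False by simp
    qed
    then have lo: "lowpt F p x" by (intro lowpt_from_freq[OF F]) (simp add: Q_def)
    have "\<not> U \<le> ereal q" using q u by simp
    then obtain y where y: "y > ereal q" "\<not> eventually (\<lambda>h. ereal (Q h) < y) (at 0)"
      unfolding U_def Limsup_le_iff by auto
    have "frequently (\<lambda>h. Q h > q) (at 0)"
      unfolding frequently_def
    proof
      assume "eventually (\<lambda>h. \<not> Q h > q) (at 0)"
      then have "eventually (\<lambda>h. ereal (Q h) < y) (at 0)"
        by (rule eventually_mono) (use y(1) in \<open>auto simp: not_less intro: le_less_trans[of _ "ereal q"]\<close>)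
      with y(2) show False by simp
    qed
    then have hi: "highpt F q x" using p q lu by (intro highpt_from_freq[OF F]) (auto simp add: Q_def)
    show ?thesis using p q lo hi lu by (intro bexI[of _ p] bexI[of _ q]) auto
  qed
qed

lemma emeasure_lebesgue_borel: "A \<in> sets borel \<Longrightarrow> emeasure lebesgue A = emeasure lborel A"
  by (simp add: emeasure_completion)

lemma lowpt_borel: "{x. lowpt F p x} \<in> sets borel"
proof -
  define Op where "Op n = {x. \<exists>a b. a < x \<and> x < b \<and> b - a < inverse (real (Suc n)) \<and> F b - F a < p * (b - a)}" for n
  have "open (Op n)" for n
  proof -
    have "Op n = (\<Union>ab\<in>{(a,b). b - a < inverse (real (Suc n)) \<and> F b - F a < p * (b - a)}. {fst ab<..<snd ab})"
      unfolding Op_def by fastforce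
    then show ?thesis by auto
  qed
  moreover have "{x. lowpt F p x} = (\<Inter>n. Op n)"
  proof safe
    fix x n assume "lowpt F p x" then show "x \<in> Op n" unfolding lowpt_def Op_def by auto
  next
    fix x assume x: "x \<in> (\<Inter>n. Op n)"
    show "lowpt F p x" unfolding lowpt_def
    proof (intro allI impI)
      fix d :: real assume "d > 0"
      then obtain n where n: "inverse (real (Suc n)) < d" using reals_Archimedean by blast
      from x have "x \<in> Op n" by auto
      then obtain a b where ab: "a < x" "x < b" "b - a < inverse (real (Suc n))" "F b - F a < p * (b - a)"
        unfolding Op_def by blast
      then show "\<exists>a b. a < x \<and> x < b \<and> b - a < d \<and> F b - F a < p * (b - a)"
        using n by (intro exI[of _ a] exI[of _ b]) auto
    qed
  qed
  ultimately show ?thesis by auto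
qed

lemma highpt_borel: "{x. highpt F p x} \<in> sets borel"
proof -
  define Op where "Op n = {x. \<exists>a b. a < x \<and> x < b \<and> b - a < inverse (real (Suc n)) \<and> F b - F a > p * (b - a)}" for n
  have "open (Op n)" for n
  proof -
    have "Op n = (\<Union>ab\<in>{(a,b). b - a < inverse (real (Suc n)) \<and> F b - F a > p * (b - a)}. {fst ab<..<snd ab})"
      unfolding Op_def by fastforce
    then show ?thesis by auto
  qed
  moreover have "{x. highpt F p x} = (\<Inter>n. Op n)"
  proof safe
    fix x n assume "highpt F p x" then show "x \<in> Op n" unfolding highpt_def Op_def by auto
  next
    fix x assume x: "x \<in> (\<Inter>n. Op n)"
    show "highpt F p x" unfolding highpt_def
    proof (intro allI impI)
      fix d :: real assume "d > 0"
      then obtain n where n: "inverse (real (Suc n)) < d" using reals_Archimedean by blast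
      from x have "x \<in> Op n" by auto
      then obtain a b where ab: "a < x" "x < b" "b - a < inverse (real (Suc n))" "F b - F a > p * (b - a)"
        unfolding Op_def by blast
      then show "\<exists>a b. a < x \<and> x < b \<and> b - a < d \<and> F b - F a > p * (b - a)"
        using n by (intro exI[of _ a] exI[of _ b]) auto
    qed
  qed
  ultimately show ?thesis by auto
qed



lemma vitali_intervals:
  fixes S W :: "real set"
  assumes W: "open W" "S \<subseteq> W"
    and fine: "\<And>x d. x \<in> S \<Longrightarrow> d > 0 \<Longrightarrow> \<exists>a b. a < x \<and> x < b \<and> b - a < d \<and> P a b"
  obtains C where "countable C" "C \<subseteq> {(a,b). a < b \<and> {a..b} \<subseteq> W \<and> P a b}"
    "disjoint_family_on (\<lambda>i. {fst i<..<snd i}) C"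
    "negligible (S - (\<Union>i\<in>C. {fst i<..<snd i}))"
proof -
  define K where "K = {(a,b). a < b \<and> {a..b} \<subseteq> W \<and> P a b}"
  define c where "c i = (fst i + snd i) / 2" for i :: "real \<times> real"
  define r where "r i = (snd i - fst i) / 2" for i :: "real \<times> real"
  have ball_eq: "ball (c i) (r i) = {fst i<..<snd i}" for i
  proof -
    have "c i - r i = fst i" "c i + r i = snd i" unfolding c_def r_def by (simp_all add: field_simps)
    then show ?thesis by (simp add: ball_eq_greaterThanLessThan)
  qed
  have cov: "\<exists>i. i \<in> K \<and> x \<in> ball (c i) (r i) \<and> r i < d" if xS: "x \<in> S" and d0: "0 < d" for x d
  proof -
    have xW: "x \<in> W" using W(2) xS by blast
    have "\<forall>x\<in>W. \<exists>e>0. ball x e \<subseteq> W" using W(1) by (simp add: open_contains_ball)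
    then obtain e where e: "e > 0" "ball x e \<subseteq> W" using xW by blast
    have md: "min d e > 0" using d0 e(1) by simp
    obtain a b where ab: "a < x" "x < b" "b - a < min d e" "P a b"
      using fine[OF xS md] by blast
    have "{a..b} \<subseteq> ball x e"
    proof
      fix y assume "y \<in> {a..b}" then show "y \<in> ball x e" using ab by (auto simp: dist_real_def)
    qed
    then have "(a,b) \<in> K" using ab e unfolding K_def by auto
    moreover have "x \<in> ball (c (a,b)) (r (a,b))" unfolding ball_eq using ab by simp
    moreover have "r (a,b) < d" using ab unfolding r_def by simp
    ultimately show ?thesis by blast
  qed
  obtain C where C: "countable C" "C \<subseteq> K"
     "pairwise (\<lambda>i j. disjnt (ball (c i) (r i)) (ball (c j) (r j))) C"
     "negligible(S - (\<Union>i \<in> C. ball (c i) (r i)))"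
    by (rule Vitali_covering_theorem_balls[of S K c r, OF cov])
  show ?thesis
  proof (rule that[of C])
    show "countable C" by fact
    show "C \<subseteq> {(a,b). a < b \<and> {a..b} \<subseteq> W \<and> P a b}" using C(2) K_def by auto
    show "disjoint_family_on (\<lambda>i. {fst i<..<snd i}) C"
      using C(3) unfolding disjoint_family_on_def pairwise_def disjnt_def ball_eq by auto
    show "negligible (S - (\<Union>i\<in>C. {fst i<..<snd i}))" using C(4) by (simp add: ball_eq)
  qed
qed



lemma lipmono_cont: "lipmono F \<Longrightarrow> continuous_on UNIV F"
proof -
  assume F: "lipmono F"
  have "dist (F y) (F x) \<le> dist y x" for x y
  proof (cases "x \<le> y")
    case True then show ?thesis using lipmonoD[OF F True] by (auto simp: dist_real_def)
  next
    case False then have "y \<le> x" by auto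
    then show ?thesis using lipmonoD[OF F \<open>y \<le> x\<close>] by (auto simp: dist_real_def)
  qed
  note dl = this
  show ?thesis unfolding continuous_on_iff
  proof (intro ballI allI impI)
    fix x and e :: real assume "e > 0"
    show "\<exists>d>0. \<forall>x'\<in>UNIV. dist x' x < d \<longrightarrow> dist (F x') (F x) < e"
      using \<open>e > 0\<close> dl by (intro exI[of _ e]) (auto intro: le_less_trans)
  qed
qed

lemma lipmono_mono: "lipmono F \<Longrightarrow> x \<le> y \<Longrightarrow> F x \<le> F y"
  using lipmonoD by blast

lemma imeasure_Ioo:
  assumes F: "lipmono F" and ab: "a \<le> b"
  shows "emeasure (interval_measure F) {a<..<b} = ennreal (F b - F a)"
proof -
  let ?M = "interval_measure F"
  have cont: "continuous_on UNIV F" using lipmono_cont[OF F] .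
  have rc: "continuous (at_right x) F" for x
    using cont by (simp add: continuous_on_eq_continuous_at continuous_at_imp_continuous_at_within)
  have single: "emeasure ?M {x} = 0" for x
  proof -
    have "emeasure ?M {x..x} = ennreal (F x - F x)"
      by (rule emeasure_interval_measure_Icc) (auto intro: lipmono_mono[OF F] cont)
    then show ?thesis by simp
  qed
  have Ioc: "emeasure ?M {a<..b} = ennreal (F b - F a)"
    by (rule emeasure_interval_measure_Ioc) (auto intro: lipmono_mono[OF F] rc ab)
  show ?thesis
  proof (cases "a = b")
    case True then show ?thesis by simp
  next
    case False
    then have "{a<..b} = {a<..<b} \<union> {b}" using ab by auto
    moreover have "emeasure ?M {a<..<b} + emeasure ?M {b} = emeasure ?M ({a<..<b} \<union> {b})"
      by (rule plus_emeasure) auto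
    ultimately have "emeasure ?M {a<..b} = emeasure ?M {a<..<b} + emeasure ?M {b}" by simp
    then show ?thesis using Ioc single[of b] by (metis add.right_neutral)
  qed
qed

lemma sum_measures:
  assumes F: "lipmono F" and C: "countable C"
    and disj: "disjoint_family_on (\<lambda>i. {fst i<..<snd i}) C" and lt: "\<And>i. i \<in> C \<Longrightarrow> fst i < snd i"
  shows "emeasure (interval_measure F) (\<Union>i\<in>C. {fst i<..<snd i}) = (\<integral>\<^sup>+ i. ennreal (F (snd i) - F (fst i)) \<partial>count_space C)"
    and "emeasure lborel (\<Union>i\<in>C. {fst i<..<snd i}) = (\<integral>\<^sup>+ i. ennreal (snd i - fst i) \<partial>count_space C)"
proof -
  have "emeasure (interval_measure F) (\<Union>i\<in>C. {fst i<..<snd i}) = (\<integral>\<^sup>+ i. emeasure (interval_measure F) {fst i<..<snd i} \<partial>count_space C)"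
    by (rule emeasure_UN_countable) (auto simp: C disj)
  also have "\<dots> = (\<integral>\<^sup>+ i. ennreal (F (snd i) - F (fst i)) \<partial>count_space C)"
    by (rule nn_integral_cong) (auto intro!: imeasure_Ioo[OF F] less_imp_le lt)
  finally show "emeasure (interval_measure F) (\<Union>i\<in>C. {fst i<..<snd i}) = (\<integral>\<^sup>+ i. ennreal (F (snd i) - F (fst i)) \<partial>count_space C)" .
  have "emeasure lborel (\<Union>i\<in>C. {fst i<..<snd i}) = (\<integral>\<^sup>+ i. emeasure lborel {fst i<..<snd i} \<partial>count_space C)"
    by (rule emeasure_UN_countable) (auto simp: C disj)
  also have "\<dots> = (\<integral>\<^sup>+ i. ennreal (snd i - fst i) \<partial>count_space C)"
    by (rule nn_integral_cong) (auto intro!: emeasure_lborel_Ioo less_imp_le lt)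
  finally show "emeasure lborel (\<Union>i\<in>C. {fst i<..<snd i}) = (\<integral>\<^sup>+ i. ennreal (snd i - fst i) \<partial>count_space C)" .
qed

lemma negligible_borel_emeasure0:
  assumes "A \<in> sets borel" "negligible A" shows "emeasure lborel A = 0"
proof -
  have "A \<in> sets lebesgue" using assms(1) by (simp add: sets_completionI_sets)
  then have "emeasure lebesgue A = 0" using assms(2) negligible_iff_emeasure0 by blast
  then show ?thesis using assms(1) by (simp add: emeasure_lebesgue_borel)
qed

lemma neg_bad_bounded:
  assumes F: "lipmono F" and p: "0 < p" and pq: "p < q"
    and Sb: "S \<in> sets borel" and Ssub: "S \<subseteq> {x. lowpt F p x \<and> highpt F q x}"
    and fin: "emeasure lborel S < \<infinity>" and e: "\<epsilon> > 0"
  shows "ennreal q * emeasure lborel S \<le> ennreal p * (emeasure lborel S + ennreal \<epsilon>)"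
proof -
  let ?m = "emeasure lborel S"
  let ?mu = "interval_measure F"
  have Sl: "S \<in> sets lebesgue" using Sb by (simp add: sets_completionI_sets)
  obtain U where U: "open U" "S \<subseteq> U" "emeasure lebesgue (U - S) < ennreal \<epsilon>"
    using sets_lebesgue_outer_open[OF Sl e] by blast
  have Ub: "U \<in> sets borel" using U(1) by auto
  have "emeasure lborel (U - S) < ennreal \<epsilon>" using U(3) Ub Sb by (simp add: emeasure_lebesgue_borel)
  moreover have "emeasure lborel U \<le> ?m + emeasure lborel (U - S)"
  proof -
    have "U = S \<union> (U - S)" using U(2) by auto
    then have "emeasure lborel U = emeasure lborel (S \<union> (U - S))" by simp
    also have "\<dots> \<le> ?m + emeasure lborel (U - S)" by (rule emeasure_subadditive) (use Sb Ub in auto)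
    finally show ?thesis .
  qed
  ultimately have lamU: "emeasure lborel U \<le> ?m + ennreal \<epsilon>"
    by (meson add_left_mono less_imp_le order_trans)
  obtain C1 where C1: "countable C1" "C1 \<subseteq> {(a,b). a < b \<and> {a..b} \<subseteq> U \<and> F b - F a < p * (b - a)}"
    "disjoint_family_on (\<lambda>i. {fst i<..<snd i}) C1" "negligible (S - (\<Union>i\<in>C1. {fst i<..<snd i}))"
  proof (rule vitali_intervals[OF U(1) U(2)])
    fix x d assume "x \<in> S" "(d::real) > 0"
    then show "\<exists>a b. a < x \<and> x < b \<and> b - a < d \<and> F b - F a < p * (b - a)"
      using Ssub unfolding lowpt_def by blast
  qed
  define V where "V = (\<Union>i\<in>C1. {fst i<..<snd i})"
  have Vopen: "open V" unfolding V_def by auto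
  have Vb: "V \<in> sets borel" using Vopen by auto
  have VU: "V \<subseteq> U" unfolding V_def using C1(2) by force
  have lt1: "fst i < snd i" if "i \<in> C1" for i using C1(2) that by auto
  have muV: "emeasure ?mu V \<le> ennreal p * emeasure lborel V"
  proof -
    have "emeasure ?mu V = (\<integral>\<^sup>+ i. ennreal (F (snd i) - F (fst i)) \<partial>count_space C1)"
      unfolding V_def by (rule sum_measures(1)[OF F C1(1) C1(3) lt1])
    also have "\<dots> \<le> (\<integral>\<^sup>+ i. ennreal p * ennreal (snd i - fst i) \<partial>count_space C1)"
    proof (rule nn_integral_mono)
      fix i assume "i \<in> space (count_space C1)"
      then have i: "i \<in> C1" by simp
      then have "F (snd i) - F (fst i) \<le> p * (snd i - fst i)" using C1(2) by auto
      then have "ennreal (F (snd i) - F (fst i)) \<le> ennreal (p * (snd i - fst i))" by (rule ennreal_leI)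
      also have "\<dots> = ennreal p * ennreal (snd i - fst i)" using p lt1[OF i] by (simp add: ennreal_mult)
      finally show "ennreal (F (snd i) - F (fst i)) \<le> ennreal p * ennreal (snd i - fst i)" .
    qed
    also have "\<dots> = ennreal p * (\<integral>\<^sup>+ i. ennreal (snd i - fst i) \<partial>count_space C1)"
      by (rule nn_integral_cmult) simp
    also have "\<dots> = ennreal p * emeasure lborel V"
      unfolding V_def by (simp add: sum_measures(2)[OF F C1(1) C1(3) lt1])
    finally show ?thesis .
  qed
  have "emeasure lborel V \<le> emeasure lborel U" using VU Ub by (intro emeasure_mono) auto
  then have muV2: "emeasure ?mu V \<le> ennreal p * (?m + ennreal \<epsilon>)"
    using muV lamU by (meson mult_left_mono order_trans zero_le)
  have SV0: "emeasure lborel (S - V) = 0"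
    using C1(4) unfolding V_def[symmetric] by (intro negligible_borel_emeasure0) (use Sb Vb in auto)
  have SS: "S \<inter> V \<subseteq> V" by auto
  obtain C2 where C2: "countable C2" "C2 \<subseteq> {(a,b). a < b \<and> {a..b} \<subseteq> V \<and> F b - F a > q * (b - a)}"
    "disjoint_family_on (\<lambda>i. {fst i<..<snd i}) C2" "negligible ((S \<inter> V) - (\<Union>i\<in>C2. {fst i<..<snd i}))"
  proof (rule vitali_intervals[OF Vopen SS])
    fix x d assume "x \<in> S \<inter> V" "(d::real) > 0"
    then show "\<exists>a b. a < x \<and> x < b \<and> b - a < d \<and> F b - F a > q * (b - a)"
      using Ssub unfolding highpt_def by blast
  qed
  define V2 where "V2 = (\<Union>i\<in>C2. {fst i<..<snd i})"
  have "open V2" unfolding V2_def by auto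
  then have V2b: "V2 \<in> sets borel" by auto
  have V2V: "V2 \<subseteq> V" unfolding V2_def using C2(2) by force
  have lt2: "fst i < snd i" if "i \<in> C2" for i using C2(2) that by auto
  have muV2': "ennreal q * emeasure lborel V2 \<le> emeasure ?mu V2"
  proof -
    have "ennreal q * emeasure lborel V2 = ennreal q * (\<integral>\<^sup>+ i. ennreal (snd i - fst i) \<partial>count_space C2)"
      unfolding V2_def by (simp add: sum_measures(2)[OF F C2(1) C2(3) lt2])
    also have "\<dots> = (\<integral>\<^sup>+ i. ennreal q * ennreal (snd i - fst i) \<partial>count_space C2)"
      by (rule nn_integral_cmult[symmetric]) simp
    also have "\<dots> \<le> (\<integral>\<^sup>+ i. ennreal (F (snd i) - F (fst i)) \<partial>count_space C2)"
    proof (rule nn_integral_mono)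
      fix i assume "i \<in> space (count_space C2)"
      then have i: "i \<in> C2" by simp
      have "ennreal q * ennreal (snd i - fst i) = ennreal (q * (snd i - fst i))"
        using p pq lt2[OF i] by (simp add: ennreal_mult)
      also have "\<dots> \<le> ennreal (F (snd i) - F (fst i))"
        using C2(2) i by (intro ennreal_leI) auto
      finally show "ennreal q * ennreal (snd i - fst i) \<le> ennreal (F (snd i) - F (fst i))" .
    qed
    also have "\<dots> = emeasure ?mu V2"
      unfolding V2_def by (rule sum_measures(1)[OF F C2(1) C2(3) lt2, symmetric])
    finally show ?thesis .
  qed
  have SVV20: "emeasure lborel ((S \<inter> V) - V2) = 0"
    using C2(4) unfolding V2_def[symmetric] by (intro negligible_borel_emeasure0) (use Sb Vb V2b in auto)
  have "?m \<le> emeasure lborel V2"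
  proof -
    have "S \<subseteq> V2 \<union> ((S \<inter> V) - V2) \<union> (S - V)" by auto
    then have "?m \<le> emeasure lborel (V2 \<union> ((S \<inter> V) - V2) \<union> (S - V))"
      by (intro emeasure_mono) (use Sb Vb V2b in auto)
    also have "\<dots> \<le> emeasure lborel (V2 \<union> ((S \<inter> V) - V2)) + emeasure lborel (S - V)"
      by (rule emeasure_subadditive) (use Sb Vb V2b in auto)
    also have "\<dots> \<le> emeasure lborel V2 + emeasure lborel ((S \<inter> V) - V2) + emeasure lborel (S - V)"
      by (intro add_right_mono emeasure_subadditive) (use Sb Vb V2b in auto)
    finally show ?thesis using SV0 SVV20 by simp
  qed
  then have "ennreal q * ?m \<le> ennreal q * emeasure lborel V2" by (rule mult_left_mono) simp
  also have "\<dots> \<le> emeasure ?mu V2" by (rule muV2')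
  also have "\<dots> \<le> emeasure ?mu V" using V2V Vb by (intro emeasure_mono) auto
  also have "\<dots> \<le> ennreal p * (?m + ennreal \<epsilon>)" by (rule muV2)
  finally show ?thesis .
qed

lemma neg_bad:
  assumes F: "lipmono F" and p: "0 < p" and pq: "p < q"
  shows "negligible {x. lowpt F p x \<and> highpt F q x}"
proof -
  define E where "E = {x. lowpt F p x \<and> highpt F q x}"
  have Eb: "E \<in> sets borel" unfolding E_def
    using lowpt_borel[of F p] highpt_borel[of F q] by (simp add: Collect_conj_eq sets.Int)
  have "negligible (E \<inter> {- real n<..<real n})" for n
  proof -
    define S where "S = E \<inter> {- real n<..<real n}"
    have Sb: "S \<in> sets borel" unfolding S_def using Eb by auto
    have "emeasure lborel S \<le> emeasure lborel {- real n<..<real n}"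
      unfolding S_def by (intro emeasure_mono) auto
    also have "\<dots> = ennreal (real n - - real n)" by (rule emeasure_lborel_Ioo) simp
    finally have fin: "emeasure lborel S < \<infinity>" by (simp add: ennreal_less_top order.strict_trans1)
    then have "emeasure lborel S \<noteq> \<infinity>" by simp
    then obtain mr where mr: "emeasure lborel S = ennreal mr" "mr \<ge> 0"
      by (cases "emeasure lborel S" rule: ennreal_cases) auto
    have key: "q * mr \<le> p * (mr + e)" if e: "e > 0" for e
    proof -
      have "ennreal q * emeasure lborel S \<le> ennreal p * (emeasure lborel S + ennreal e)"
        by (rule neg_bad_bounded[OF F p pq Sb _ fin e]) (auto simp: S_def E_def)
      then have "ennreal (q * mr) \<le> ennreal (p * (mr + e))"
        using mr p pq e by (simp add: ennreal_mult ennreal_plus[symmetric] del: ennreal_plus)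
      then show ?thesis using p e mr by (simp add: ennreal_le_iff)
    qed
    have "mr = 0"
    proof (rule ccontr)
      assume "mr \<noteq> 0" then have mp: "mr > 0" using mr by auto
      define e where "e = (q - p) * mr / (2 * p)"
      have e0: "e > 0" unfolding e_def using mp p pq by auto
      have "q * mr \<le> p * (mr + e)" by (rule key[OF e0])
      also have "p * (mr + e) = p * mr + (q - p) * mr / 2" unfolding e_def using p by (simp add: field_simps)
      finally have "q * mr \<le> p * mr + (q - p) * mr / 2" .
      moreover have "(q - p) * mr = q*mr - p*mr" by (simp add: left_diff_distrib)
      ultimately have "(q - p) * mr / 2 \<le> 0" by linarith
      moreover have "(q - p) * mr / 2 > 0" using mp pq by simp
      ultimately show False by simp
    qed
    then have "emeasure lborel S = 0" using mr by simp
    then have "S \<in> null_sets lborel" using Sb by (simp add: null_sets_def)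
    then have "S \<in> null_sets lebesgue" by (rule null_sets_completionI)
    then show ?thesis unfolding S_def negligible_iff_null_sets .
  qed
  then have "negligible (\<Union>n. E \<inter> {- real n<..<real n})" by (rule negligible_Union_nat)
  moreover have "(\<Union>n. E \<inter> {- real n<..<real n}) = E"
  proof safe
    fix x assume "x \<in> E"
    obtain n :: nat where "\<bar>x\<bar> < real n" using reals_Archimedean2 by blast
    then have "x \<in> E \<inter> {- real n<..<real n}" using \<open>x \<in> E\<close> by auto
    then show "x \<in> (\<Union>n. E \<inter> {- real n<..<real n})" by blast
  qed
  ultimately show ?thesis unfolding E_def by simp
qed

theorem lipmono_ae_differentiable:
  assumes F: "lipmono F"
  shows "negligible {x. \<not> F differentiable (at x)}"
proof -
  define B where "B = (\<lambda>(p,q). if 0 < p \<and> p < q then {x. lowpt F p x \<and> highpt F q x} else {}) ` (\<rat> \<times> \<rat>)"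
  have "countable B" unfolding B_def by (intro countable_image countable_SIGMA countable_rat)
  moreover have "negligible S" if "S \<in> B" for S
    using that unfolding B_def by (auto intro: neg_bad[OF F])
  ultimately have "negligible (\<Union>B)" by (rule negligible_countable_Union)
  moreover have "{x. \<not> F differentiable (at x)} \<subseteq> \<Union>B"
  proof
    fix x assume "x \<in> {x. \<not> F differentiable (at x)}"
    then obtain p q where pq: "p \<in> \<rat>" "q \<in> \<rat>" "0 < p" "p < q" "lowpt F p x" "highpt F q x"
      using nondiff_bad[OF F] by blast
    then have "x \<in> (\<lambda>(p,q). if 0 < p \<and> p < q then {x. lowpt F p x \<and> highpt F q x} else {}) (p, q)" by simp
    moreover have "(p,q) \<in> \<rat> \<times> \<rat>" using pq by auto
    ultimately show "x \<in> \<Union>B" unfolding B_def by blast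
  qed
  ultimately show ?thesis by (rule negligible_subset)
qed

definition dF :: "(real \<Rightarrow> real) \<Rightarrow> real \<Rightarrow> real" where
  "dF F t = (if F differentiable (at t) then deriv F t else 0)"

lemma seq_at0: "filterlim (\<lambda>n. inverse (real (Suc n))) (at (0::real)) sequentially"
proof -
  have "(\<lambda>n. inverse (real (Suc n))) \<longlonglongrightarrow> (0::real)" by (rule LIMSEQ_inverse_real_of_nat)
  moreover have "eventually (\<lambda>n. inverse (real (Suc n)) \<in> UNIV \<and> inverse (real (Suc n)) \<noteq> (0::real)) sequentially"
    by simp
  ultimately show ?thesis by (simp add: filterlim_at)
qed

lemma deriv_seq:
  assumes "(F has_real_derivative D) (at x)"
  shows "(\<lambda>n. (F (x + inverse (real (Suc n))) - F x) / inverse (real (Suc n))) \<longlonglongrightarrow> D"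
proof -
  have "((\<lambda>h. (F (x + h) - F x) / h) \<longlongrightarrow> D) (at 0)" using assms by (simp add: DERIV_def)
  from filterlim_compose[OF this seq_at0] show ?thesis by (simp add: o_def)
qed

lemma dF_bounds:
  assumes F: "lipmono F" shows "0 \<le> dF F t" "dF F t \<le> 1"
proof -
  have "0 \<le> dF F t \<and> dF F t \<le> 1"
  proof (cases "F differentiable (at t)")
    case True
    then have D: "(F has_real_derivative deriv F t) (at t)" by (simp add: DERIV_deriv_iff_real_differentiable)
    then have lim: "((\<lambda>h. (F (t + h) - F t) / h) \<longlongrightarrow> deriv F t) (at 0)" by (simp add: DERIV_def)
    have ev: "eventually (\<lambda>h. 0 \<le> (F (t + h) - F t) / h \<and> (F (t + h) - F t) / h \<le> 1) (at (0::real))"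
      unfolding eventually_at using lipmono_quot[OF F] by (auto intro!: exI[of _ 1])
    have "0 \<le> deriv F t"
      by (rule tendsto_lowerbound[OF lim]) (use ev in \<open>auto elim: eventually_mono\<close>)
    moreover have "deriv F t \<le> 1"
      by (rule tendsto_upperbound[OF lim]) (use ev in \<open>auto elim: eventually_mono\<close>)
    ultimately show ?thesis using True by (simp add: dF_def)
  next
    case False then show ?thesis by (simp add: dF_def)
  qed
  then show "0 \<le> dF F t" "dF F t \<le> 1" by auto
qed

lemma lipmono_ftc:
  assumes F: "lipmono F" and ab: "a \<le> b"
  shows "(dF F has_integral (F b - F a)) {a..b}"
proof -
  define c where "c = a - 1"
  define d where "d = b + 2"
  define \<Phi> where "\<Phi> x = integral {c..x} F" for x
  define h where "h n = inverse (real (Suc n))" for n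
  have h: "0 < h n" "h n \<le> 1" for n unfolding h_def by (auto simp: field_simps)
  have cont: "continuous_on UNIV F" by (rule lipmono_cont[OF F])
  have contI: "continuous_on S F" for S using cont continuous_on_subset by blast
  have intF: "F integrable_on {x..y}" for x y by (rule integrable_continuous_interval[OF contI])
  have dPhi: "(\<Phi> has_real_derivative F x) (at x)" if "c < x" "x < d" for x
  proof -
    have "(\<Phi> has_real_derivative F x) (at x within {c..d})"
      unfolding \<Phi>_def by (rule integral_has_real_derivative[OF contI]) (use that in auto)
    moreover have "at x within {c..d} = at x" using that by (simp add: at_within_Icc_at)
    ultimately show ?thesis by simp
  qed
  have Phi_diff: "integral {x..y} F = \<Phi> y - \<Phi> x" if "c \<le> x" "x \<le> y" for x y
    using Henstock_Kurzweil_Integration.integral_combine[OF that intF[of c y]] unfolding \<Phi>_def by simp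
  define Q where "Q n t = (F (t + h n) - F t) / h n" for n t
  have intQ: "integral {a..b} (Q n) = (\<Phi> (b + h n) - \<Phi> b) / h n - (\<Phi> (a + h n) - \<Phi> a) / h n" for n
  proof -
    have "integral {a..b} (Q n) = (integral {a..b} (\<lambda>t. F (t + h n)) - integral {a..b} F) / h n"
      unfolding Q_def using intF
      by (simp add: integral_diff integral_divide integrable_continuous_interval continuous_on_compose2[OF cont] continuous_intros
             flip: diff_divide_distrib)
    also have "integral {a..b} (\<lambda>t. F (t + h n)) = integral {a + h n..b + h n} F"
      using integral_shift_Icc_real[of a b F "h n"] by (simp add: o_def add.commute)
    also have "\<dots> = \<Phi> (b + h n) - \<Phi> (a + h n)" using h[of n] ab by (intro Phi_diff) (auto simp: c_def)
    also have "integral {a..b} F = \<Phi> b - \<Phi> a" using ab by (intro Phi_diff) (auto simp: c_def)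
    finally show ?thesis by (simp add: diff_divide_distrib)
  qed
  have limQ: "(\<lambda>n. integral {a..b} (Q n)) \<longlonglongrightarrow> F b - F a"
    unfolding intQ h_def
    by (intro tendsto_diff deriv_seq dPhi) (use ab in \<open>auto simp: c_def d_def\<close>)
  define N where "N = {x. \<not> F differentiable (at x)}"
  have N: "negligible N" unfolding N_def by (rule lipmono_ae_differentiable[OF F])
  define g where "g n t = (if F differentiable (at t) then Q n t else 0)" for n t
  have contQ: "continuous_on {a..b} (Q n)" for n
    unfolding Q_def by (intro continuous_intros continuous_on_compose2[OF cont]) (use h[of n] in auto)
  have intQ': "Q n integrable_on {a..b}" for n by (rule integrable_continuous_interval[OF contQ])
  have gi: "g n integrable_on {a..b}" for n
    by (rule integrable_spike[OF intQ'[of n] N]) (auto simp: g_def N_def)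
  have gint: "integral {a..b} (g n) = integral {a..b} (Q n)" for n
    by (rule integral_spike[OF N]) (auto simp: g_def N_def)
  have gb: "norm (g n t) \<le> 1" for n t
  proof -
    have "h n \<noteq> 0" using h[of n] by simp
    then show ?thesis using lipmono_quot[OF F, of "h n" t] unfolding g_def Q_def by (auto simp: add.commute)
  qed
  have glim: "(\<lambda>n. g n t) \<longlonglongrightarrow> dF F t" for t
  proof (cases "F differentiable (at t)")
    case True
    then have D: "(F has_real_derivative deriv F t) (at t)" by (simp add: DERIV_deriv_iff_real_differentiable)
    show ?thesis using deriv_seq[OF D] True unfolding g_def Q_def dF_def h_def by simp
  next
    case False then show ?thesis by (simp add: g_def dF_def)
  qed
  have dc: "dF F integrable_on {a..b}" "(\<lambda>n. integral {a..b} (g n)) \<longlonglongrightarrow> integral {a..b} (dF F)"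
    by (rule dominated_convergence[of g "{a..b}" "\<lambda>_. 1" "dF F"]; (use gi gb glim in auto)?)+
  have "integral {a..b} (dF F) = F b - F a"
    using dc(2) limQ unfolding gint by (rule LIMSEQ_unique)
  then show ?thesis using dc(1) by (metis has_integral_integrable_integral)
qed

lemma MBI:
  fixes f :: "real \<Rightarrow> real"
  assumes m: "f \<in> borel_measurable (lebesgue_on {a..b})" and bd: "\<And>x. x \<in> {a<..<b} \<Longrightarrow> \<bar>f x\<bar> \<le> C"
  shows "f integrable_on {a..b}"
proof -
  have m': "f \<in> borel_measurable (lebesgue_on {a<..<b})"
    by (rule measurable_restrict_mono[OF m]) auto
  have "f integrable_on {a<..<b}"
    by (rule measurable_bounded_by_integrable_imp_integrable[OF m', of "\<lambda>_. C"])
       (use bd in \<open>auto simp: integrable_on_open_interval_real\<close>)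
  then show ?thesis by (simp add: integrable_on_open_interval_real)
qed

lemma HKL:
  fixes f :: "real \<Rightarrow> real"
  assumes fi: "f integrable_on {a..b}" and bd: "\<And>x. x \<in> {a<..<b} \<Longrightarrow> \<bar>f x\<bar> \<le> C"
  shows "integrable (lebesgue_on {a..b}) f" "(LINT x|lebesgue_on {a..b}. f x) = integral {a..b} f"
proof -
  define f0 where "f0 x = (if x \<in> {a<..<b} then f x else 0)" for x
  have neg: "negligible {a, b}" by auto
  have f0i: "f0 integrable_on {a..b}"
    by (rule integrable_spike[OF fi neg]) (auto simp: f0_def)
  have f0m: "f0 \<in> borel_measurable (lebesgue_on {a..b})" by (rule integrable_imp_measurable[OF f0i])
  have "f0 absolutely_integrable_on {a..b}"
    by (rule measurable_bounded_by_integrable_imp_absolutely_integrable[OF f0m _, of "\<lambda>_. \<bar>C\<bar>"])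
       (use bd in \<open>auto simp: f0_def intro: order_trans[OF _ abs_ge_self]\<close>)
  then have fa: "f absolutely_integrable_on {a..b}"
    by (rule absolutely_integrable_spike[OF _ neg]) (auto simp: f0_def)
  then have "f \<in> borel_measurable (lebesgue_on {a..b})" "integrable (lebesgue_on {a..b}) (norm \<circ> f)"
    using absolutely_integrable_measurable[of "{a..b}" f] fa by auto
  then show i: "integrable (lebesgue_on {a..b}) f"
    by (simp add: o_def integrable_abs_iff)
  show "(LINT x|lebesgue_on {a..b}. f x) = integral {a..b} f"
    by (rule lebesgue_integral_eq_integral[OF i]) auto
qed

definition Gk :: "(real \<Rightarrow> real) \<Rightarrow> real \<Rightarrow> real" where
  "Gk k s = integral {0..1} (\<lambda>t. min (k t) s)"

definition goodb :: "(real \<Rightarrow> real) \<Rightarrow> bool" where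
  "goodb k \<longleftrightarrow> k integrable_on {0..1} \<and> (\<forall>t\<in>{0<..<1}. 0 \<le> k t \<and> k t \<le> 1)"

lemma goodb_sub:
  assumes "goodb k" "0 \<le> a" "b \<le> 1"
  shows "k integrable_on {a..b}"
  using assms unfolding goodb_def by (auto intro: integrable_on_subinterval)

lemma min_integrable:
  assumes k: "goodb k" and ab: "0 \<le> a" "b \<le> 1"
  shows "(\<lambda>t. min (k t) s) integrable_on {a..b}"
proof -
  have "k \<in> borel_measurable (lebesgue_on {a..b})"
    by (rule integrable_imp_measurable[OF goodb_sub[OF k ab]])
  then have m: "(\<lambda>t. min (k t) s) \<in> borel_measurable (lebesgue_on {a..b})"
    by (intro borel_measurable_min) auto
  show ?thesis
  proof (rule MBI[OF m, of "1 + \<bar>s\<bar>"])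
    fix x assume "x \<in> {a<..<b}"
    then have "0 \<le> k x \<and> k x \<le> 1" using k ab unfolding goodb_def by auto
    then show "\<bar>min (k x) s\<bar> \<le> 1 + \<bar>s\<bar>" by (auto simp: min_def)
  qed
qed

lemma Gk_lipmono:
  assumes k: "goodb k" shows "lipmono (Gk k)"
  unfolding lipmono_def
proof (intro allI impI conjI)
  fix x y :: real assume xy: "x \<le> y"
  have ix: "(\<lambda>t. min (k t) x) integrable_on {0..1}" and iy: "(\<lambda>t. min (k t) y) integrable_on {0..1}"
    using min_integrable[OF k] by auto
  show "Gk k x \<le> Gk k y" unfolding Gk_def
    by (rule integral_le[OF ix iy]) (use xy in auto)
  have ixc: "(\<lambda>t. min (k t) x + (y - x)) integrable_on {0..1}"
    by (intro integrable_add ix integrable_continuous_interval continuous_on_const)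
  have "Gk k y \<le> integral {0..1} (\<lambda>t. min (k t) x + (y - x))" unfolding Gk_def
    by (rule integral_le[OF iy ixc]) (use xy in \<open>auto simp: min_def\<close>)
  also have "\<dots> = Gk k x + integral {0..1} (\<lambda>t::real. y - x)" unfolding Gk_def
    by (rule Henstock_Kurzweil_Integration.integral_add[OF ix]) (intro integrable_continuous_interval continuous_on_const)
  also have "\<dots> = Gk k x + (y - x)" by simp
  finally show "Gk k y - Gk k x \<le> y - x" by simp
qed

lemma Gk_0: assumes k: "goodb k" shows "Gk k 0 = 0"
proof -
  have "Gk k 0 = integral {0..1} (\<lambda>_::real. 0::real)" unfolding Gk_def
    by (rule Henstock_Kurzweil_Integration.integral_spike[where S="{0::real,1}"]) (use k in \<open>auto simp: goodb_def\<close>)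
  then show ?thesis by simp
qed

lemma Gk_1: assumes k: "goodb k" shows "Gk k 1 = integral {0..1} k"
  unfolding Gk_def
  by (rule Henstock_Kurzweil_Integration.integral_spike[where S="{0::real,1}"]) (use k in \<open>auto simp: goodb_def\<close>)

lemma seq_at0': "filterlim (\<lambda>n. - inverse (real (Suc n))) (at (0::real)) sequentially"
proof -
  have "(\<lambda>n. - inverse (real (Suc n))) \<longlonglongrightarrow> (0::real)"
    using tendsto_minus[OF LIMSEQ_inverse_real_of_nat] by simp
  moreover have "eventually (\<lambda>n. - inverse (real (Suc n)) \<in> UNIV \<and> - inverse (real (Suc n)) \<noteq> (0::real)) sequentially"
    by simp
  ultimately show ?thesis by (simp add: filterlim_at)
qed

lemma deriv_seq_left:
  assumes "(F has_real_derivative D) (at x)"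
  shows "(\<lambda>n. (F x - F (x - inverse (real (Suc n)))) / inverse (real (Suc n))) \<longlonglongrightarrow> D"
proof -
  have "((\<lambda>h. (F (x + h) - F x) / h) \<longlongrightarrow> D) (at 0)" using assms by (simp add: DERIV_def)
  from filterlim_compose[OF this seq_at0'] have
    "(\<lambda>n. (F (x + - inverse (real (Suc n))) - F x) / - inverse (real (Suc n))) \<longlonglongrightarrow> D" by (simp add: o_def)
  moreover have "(F (x + - inverse (real (Suc n))) - F x) / - inverse (real (Suc n)) =
      (F x - F (x - inverse (real (Suc n)))) / inverse (real (Suc n))" for n
    by (simp add: field_simps)
  ultimately show ?thesis by simp
qed

lemma minslope: "x + h \<le> y - h \<Longrightarrow> 0 < h \<Longrightarrow> min (c::real) y - min c (y - h) \<le> min c (x + h) - min c x"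
  by (auto simp: min_def)

lemma dGk_decr:
  assumes k: "goodb k" and xy: "x < y"
    and dx: "Gk k differentiable (at x)" and dy: "Gk k differentiable (at y)"
  shows "dF (Gk k) y \<le> dF (Gk k) x"
proof -
  define h where "h n = inverse (real (Suc n))" for n
  have Dx: "(Gk k has_real_derivative deriv (Gk k) x) (at x)" using dx by (simp add: DERIV_deriv_iff_real_differentiable)
  have Dy: "(Gk k has_real_derivative deriv (Gk k) y) (at y)" using dy by (simp add: DERIV_deriv_iff_real_differentiable)
  have lx: "(\<lambda>n. (Gk k (x + h n) - Gk k x) / h n) \<longlonglongrightarrow> deriv (Gk k) x"
    unfolding h_def by (rule deriv_seq[OF Dx])
  have ly: "(\<lambda>n. (Gk k y - Gk k (y - h n)) / h n) \<longlonglongrightarrow> deriv (Gk k) y"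
    unfolding h_def by (rule deriv_seq_left[OF Dy])
  obtain N where N: "inverse (real (Suc N)) < (y - x) / 2" using reals_Archimedean xy by (metis half_gt_zero diff_gt_0_iff_gt)
  have "\<forall>n\<ge>N. (Gk k y - Gk k (y - h n)) / h n \<le> (Gk k (x + h n) - Gk k x) / h n"
  proof (intro allI impI)
    fix n assume "N \<le> n"
    then have "h n \<le> inverse (real (Suc N))" unfolding h_def by (auto simp: field_simps)
    then have hle: "x + h n \<le> y - h n" using N by simp
    have hp: "0 < h n" unfolding h_def by simp
    have "Gk k y - Gk k (y - h n) = integral {0..1} (\<lambda>t. min (k t) y - min (k t) (y - h n))"
      unfolding Gk_def by (rule Henstock_Kurzweil_Integration.integral_diff[symmetric]) (auto intro: min_integrable[OF k])
    also have "\<dots> \<le> integral {0..1} (\<lambda>t. min (k t) (x + h n) - min (k t) x)"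
      by (rule integral_le) (auto intro!: integrable_diff min_integrable[OF k] minslope[OF hle hp])
    also have "\<dots> = Gk k (x + h n) - Gk k x"
      unfolding Gk_def by (rule Henstock_Kurzweil_Integration.integral_diff) (auto intro: min_integrable[OF k])
    finally show "(Gk k y - Gk k (y - h n)) / h n \<le> (Gk k (x + h n) - Gk k x) / h n"
      using hp by (simp add: divide_right_mono)
  qed
  then have "deriv (Gk k) y \<le> deriv (Gk k) x" by (intro LIMSEQ_le[OF ly lx]) blast
  then show ?thesis using dx dy by (simp add: dF_def)
qed

definition goodd :: "(real \<Rightarrow> real) \<Rightarrow> bool" where
  "goodd k \<longleftrightarrow> goodb k \<and> (\<exists>Z. negligible Z \<and>
     (\<forall>x y. x \<in> {0<..<1} - Z \<longrightarrow> y \<in> {0<..<1} - Z \<longrightarrow> x < y \<longrightarrow> k y \<le> k x))"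

lemma dGk_integrable: "goodb k \<Longrightarrow> dF (Gk k) integrable_on {a..b}"
proof (cases "a \<le> b")
  case True
  assume k: "goodb k"
  show ?thesis using lipmono_ftc[OF Gk_lipmono[OF k] True] by blast
next
  case False then show ?thesis by (simp add: integrable_on_empty)
qed

lemma dGk_int: assumes k: "goodb k" and s: "0 \<le> s" shows "integral {0..s} (dF (Gk k)) = Gk k s"
  using lipmono_ftc[OF Gk_lipmono[OF k] s] Gk_0[OF k] by (simp add: integral_unique)

lemma dGk_bounds: "goodb k \<Longrightarrow> 0 \<le> dF (Gk k) t \<and> dF (Gk k) t \<le> 1"
  using dF_bounds[OF Gk_lipmono] by blast

lemma dGk_goodd: assumes k: "goodb k" shows "goodd (dF (Gk k))"
  unfolding goodd_def goodb_def
proof (intro conjI ballI)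
  show "dF (Gk k) integrable_on {0..1}" by (rule dGk_integrable[OF k])
  fix t show "0 \<le> dF (Gk k) t" "dF (Gk k) t \<le> 1" using dGk_bounds[OF k] by auto
next
  let ?Z = "{x. \<not> Gk k differentiable (at x)}"
  have "negligible ?Z" by (rule lipmono_ae_differentiable[OF Gk_lipmono[OF k]])
  moreover have "\<forall>x y. x \<in> {0<..<1} - ?Z \<longrightarrow> y \<in> {0<..<1} - ?Z \<longrightarrow> x < y \<longrightarrow> dF (Gk k) y \<le> dF (Gk k) x"
    using dGk_decr[OF k] by blast
  ultimately show "\<exists>Z. negligible Z \<and> (\<forall>x y. x \<in> {0<..<1} - Z \<longrightarrow> y \<in> {0<..<1} - Z \<longrightarrow> x < y \<longrightarrow> dF (Gk k) y \<le> dF (Gk k) x)"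
    by blast
qed

definition Mk :: "(real \<Rightarrow> real) \<Rightarrow> real \<Rightarrow> real" where
  "Mk k s = integral {0..s} k"

lemma neg01: "negligible {0::real, 1}" by auto

lemma a_ineq:
  assumes k: "goodb k" and s: "0 \<le> s" "s \<le> 1" and v: "0 \<le> v" "v \<le> 1"
  shows "Gk k v + Mk k s \<le> Mk k 1 + s * v"
proof -
  have mi: "(\<lambda>t. min (k t) v) integrable_on {0..1}" by (rule min_integrable[OF k]) auto
  have ki: "k integrable_on {0..1}" using k by (simp add: goodb_def)
  have "Gk k v = integral {0..s} (\<lambda>t. min (k t) v) + integral {s..1} (\<lambda>t. min (k t) v)"
    unfolding Gk_def using Henstock_Kurzweil_Integration.integral_combine[OF s mi] by simp
  moreover have "integral {0..s} (\<lambda>t. min (k t) v) \<le> integral {0..s} (\<lambda>t::real. v)"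
    by (rule integral_le) (auto intro: min_integrable[OF k] s integrable_continuous_interval continuous_on_const)
  moreover have "integral {0..s} (\<lambda>t::real. v) = s * v" using s by simp
  moreover have "integral {s..1} (\<lambda>t. min (k t) v) \<le> integral {s..1} k"
    by (rule integral_le) (auto intro: min_integrable[OF k] goodb_sub[OF k] s)
  moreover have "Mk k s + integral {s..1} k = Mk k 1"
    unfolding Mk_def using Henstock_Kurzweil_Integration.integral_combine[OF s ki] by simp
  ultimately show ?thesis by linarith
qed

lemma eq_from_split:
  assumes k: "goodb k" and s: "0 \<le> s" "s \<le> 1" and v: "0 \<le> v" "v \<le> 1" and Z: "negligible Z"
    and lo: "\<And>t. t \<in> {0<..<s} - Z \<Longrightarrow> v \<le> k t"
    and hi: "\<And>t. t \<in> {s<..<1} - Z \<Longrightarrow> k t \<le> v"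
  shows "Gk k v + Mk k s = Mk k 1 + s * v"
proof -
  have mi: "(\<lambda>t. min (k t) v) integrable_on {0..1}" by (rule min_integrable[OF k]) auto
  have ki: "k integrable_on {0..1}" using k by (simp add: goodb_def)
  have Gsplit: "Gk k v = integral {0..s} (\<lambda>t. min (k t) v) + integral {s..1} (\<lambda>t. min (k t) v)"
    unfolding Gk_def using Henstock_Kurzweil_Integration.integral_combine[OF s mi] by simp
  have N1: "negligible (Z \<union> {0, s})" using Z by auto
  have "integral {0..s} (\<lambda>t. min (k t) v) = integral {0..s} (\<lambda>t::real. v)"
  proof (rule Henstock_Kurzweil_Integration.integral_spike[OF N1])
    fix x assume "x \<in> {0..s} - (Z \<union> {0, s})"
    then have "v \<le> k x" using lo by auto
    then show "v = min (k x) v" by (simp add: min_def)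
  qed
  also have "\<dots> = s * v" using s by simp
  finally have I1: "integral {0..s} (\<lambda>t. min (k t) v) = s * v" .
  have N2: "negligible (Z \<union> {s, 1})" using Z by auto
  have I2: "integral {s..1} (\<lambda>t. min (k t) v) = integral {s..1} k"
  proof (rule Henstock_Kurzweil_Integration.integral_spike[OF N2])
    fix x assume "x \<in> {s..1} - (Z \<union> {s, 1})"
    then have "k x \<le> v" using hi by auto
    then show "k x = min (k x) v" by (simp add: min_def)
  qed
  have "Mk k s + integral {s..1} k = Mk k 1"
    unfolding Mk_def using Henstock_Kurzweil_Integration.integral_combine[OF s ki] by simp
  then show ?thesis using Gsplit I1 I2 by simp
qed

lemma b_eq:
  assumes k: "goodd k" and v: "0 \<le> v" "v \<le> 1"
  shows "\<exists>s\<in>{0..1}. Gk k v + Mk k s = Mk k 1 + s * v"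
proof -
  obtain Z where Z: "negligible Z" and dec: "\<And>x y. x \<in> {0<..<1} - Z \<Longrightarrow> y \<in> {0<..<1} - Z \<Longrightarrow> x < y \<Longrightarrow> k y \<le> k x"
    using k unfolding goodd_def by blast
  have kb: "goodb k" using k by (simp add: goodd_def)
  define A where "A = {t \<in> {0<..<1} - Z. v < k t} \<union> {0}"
  define s where "s = Sup A"
  have Ane: "A \<noteq> {}" and Abd: "bdd_above A" unfolding A_def by (auto intro!: bdd_aboveI[of _ 1])
  have s0: "0 \<le> s" unfolding s_def by (rule cSup_upper[OF _ Abd]) (simp add: A_def)
  have s1: "s \<le> 1" unfolding s_def by (rule cSup_least[OF Ane]) (auto simp: A_def)
  have lo: "v \<le> k t" if t: "t \<in> {0<..<s} - Z" for t
  proof -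
    have "t < Sup A" using t s_def by simp
    then obtain t' where t': "t' \<in> A" "t < t'" using less_cSup_iff[OF Ane Abd] by blast
    then have t'': "t' \<in> {0<..<1} - Z" "v < k t'" using t unfolding A_def by auto
    have "t \<in> {0<..<1} - Z" using t s1 by auto
    then have "k t' \<le> k t" using dec t'' t'(2) by blast
    then show ?thesis using t''(2) by simp
  qed
  have hi: "k t \<le> v" if t: "t \<in> {s<..<1} - Z" for t
  proof (rule ccontr)
    assume "\<not> k t \<le> v"
    then have "t \<in> A" using t s0 unfolding A_def by auto
    then have "t \<le> s" unfolding s_def by (rule cSup_upper[OF _ Abd])
    then show False using t by simp
  qed
  show ?thesis using eq_from_split[OF kb s0 s1 v Z lo hi] s0 s1 by auto
qed

lemma c_eq:
  assumes k: "goodd k" and s: "0 \<le> s" "s \<le> 1"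
  shows "\<exists>v\<in>{0..1}. Gk k v + Mk k s = Mk k 1 + s * v"
proof -
  obtain Z where Z: "negligible Z" and dec: "\<And>x y. x \<in> {0<..<1} - Z \<Longrightarrow> y \<in> {0<..<1} - Z \<Longrightarrow> x < y \<Longrightarrow> k y \<le> k x"
    using k unfolding goodd_def by blast
  have kb: "goodb k" using k by (simp add: goodd_def)
  have kbd: "0 \<le> k t \<and> k t \<le> 1" if "t \<in> {0<..<1}" for t using kb that by (simp add: goodb_def)
  show ?thesis
  proof (cases "s = 0")
    case True
    have "Gk k 1 + Mk k s = Mk k 1 + s * 1"
      by (rule eq_from_split[OF kb s _ _ Z]) (use True kbd in auto)
    then show ?thesis by (intro bexI[of _ 1]) auto
  next
    case False
    then have sp: "0 < s" using s by simp
    define T where "T = k ` ({0<..<s} - Z)"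
    have "\<not> negligible {0<..<s}" using sp by (intro open_not_negligible) auto
    then have "{0<..<s} - Z \<noteq> {}" using Z negligible_subset by blast
    then have Tne: "T \<noteq> {}" unfolding T_def by auto
    have Tbd: "bdd_below T" unfolding T_def using kbd s by (auto intro!: bdd_belowI[of _ 0])
    define v where "v = Inf T"
    have lo: "v \<le> k t" if t: "t \<in> {0<..<s} - Z" for t
      unfolding v_def T_def by (rule cInf_lower) (use t Tbd T_def in auto)
    have hi: "k t \<le> v" if t: "t \<in> {s<..<1} - Z" for t
      unfolding v_def
    proof (rule cInf_greatest[OF Tne])
      fix y assume "y \<in> T"
      then obtain t' where t': "t' \<in> {0<..<s} - Z" "y = k t'" unfolding T_def by auto
      have "t' \<in> {0<..<1} - Z" "t \<in> {0<..<1} - Z" "t' < t" using t t' s sp by auto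
      then show "k t \<le> y" using dec t' by blast
    qed
    have v0: "0 \<le> v" unfolding v_def
      by (rule cInf_greatest[OF Tne]) (use s kbd in \<open>auto simp: T_def\<close>)
    obtain t0 where t0: "t0 \<in> {0<..<s} - Z" using \<open>{0<..<s} - Z \<noteq> {}\<close> by blast
    have v1: "v \<le> 1" using lo[OF t0] kbd[of t0] t0 s by auto
    show ?thesis using eq_from_split[OF kb s v0 v1 Z lo hi] v0 v1 by auto
  qed
qed

theorem CL:
  assumes k1: "goodd k1" and k2: "goodd k2" and T: "Mk k1 1 = Mk k2 1"
  shows "(\<forall>s\<in>{0..1}. Mk k1 s \<le> Mk k2 s) \<longleftrightarrow> (\<forall>v\<in>{0..1}. Gk k2 v \<le> Gk k1 v)"
proof
  have kb1: "goodb k1" and kb2: "goodb k2" using k1 k2 by (auto simp: goodd_def)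
  assume H: "\<forall>s\<in>{0..1}. Mk k1 s \<le> Mk k2 s"
  show "\<forall>v\<in>{0..1}. Gk k2 v \<le> Gk k1 v"
  proof
    fix v :: real assume v: "v \<in> {0..1}"
    obtain s where s: "s \<in> {0..1}" "Gk k1 v + Mk k1 s = Mk k1 1 + s * v"
      using b_eq[OF k1, of v] v by auto
    have "Gk k2 v + Mk k2 s \<le> Mk k2 1 + s * v" using a_ineq[OF kb2] s v by auto
    then show "Gk k2 v \<le> Gk k1 v" using s H T by fastforce
  qed
next
  have kb1: "goodb k1" and kb2: "goodb k2" using k1 k2 by (auto simp: goodd_def)
  assume H: "\<forall>v\<in>{0..1}. Gk k2 v \<le> Gk k1 v"
  show "\<forall>s\<in>{0..1}. Mk k1 s \<le> Mk k2 s"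
  proof
    fix s :: real assume s: "s \<in> {0..1}"
    obtain v where v: "v \<in> {0..1}" "Gk k2 v + Mk k2 s = Mk k2 1 + s * v"
      using c_eq[OF k2, of s] s by auto
    have "Gk k1 v + Mk k1 s \<le> Mk k1 1 + s * v" using a_ineq[OF kb1] s v by auto
    then show "Mk k1 s \<le> Mk k2 s" using v H T by fastforce
  qed
qed

lemma emeasure_Ioo_leb: "a \<le> b \<Longrightarrow> emeasure lebesgue {a<..<b::real} = ennreal (b - a)"
  by (simp add: emeasure_lebesgue_borel)

lemma emeasure_Ico_leb: "a \<le> b \<Longrightarrow> emeasure lebesgue {a..<b::real} = ennreal (b - a)"
  by (simp add: emeasure_lebesgue_borel)

lemma rearr_bounds:
  assumes R: "is_decr_rearr f g" and fb: "\<And>t. t \<in> {0<..<1} \<Longrightarrow> 0 \<le> f t \<and> f t \<le> 1"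
    and t0: "t0 \<in> {0<..<1}"
  shows "0 \<le> g t0 \<and> g t0 \<le> 1"
proof -
  have dec: "\<And>s t. 0 < s \<Longrightarrow> s \<le> t \<Longrightarrow> t < 1 \<Longrightarrow> g t \<le> g s"
   and eq: "\<And>y. emeasure lebesgue {t\<in>{0<..<1}. g t \<le> y} = emeasure lebesgue {t\<in>{0<..<1}. f t \<le> y}"
    using R unfolding is_decr_rearr_def by auto
  have gmeas: "{t\<in>{0<..<1}. g t \<le> y} \<in> sets lebesgue" for y
  proof -
    have "mono_on {0<..<1} (\<lambda>t. - g t)" unfolding mono_on_def using dec by force
    then have "(\<lambda>t. - g t) \<in> borel_measurable (restrict_space borel {0<..<1})"
      by (rule borel_measurable_mono_on_fnc)
    then have "(\<lambda>t. - g t) -` {-y..} \<inter> space (restrict_space borel {0<..<1}) \<in> sets (restrict_space borel {0<..<1})"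
      by (rule measurable_sets) auto
    then have "{t\<in>{0<..<1}. g t \<le> y} \<in> sets (restrict_space borel {0<..<1})"
      by (simp add: Int_def conj_commute)
    then have "{t\<in>{0<..<1}. g t \<le> y} \<in> sets borel" by (simp add: sets_restrict_space_iff)
    then show ?thesis by (simp add: sets_completionI_sets)
  qed
  have "g t0 \<le> 1"
  proof (rule ccontr)
    assume "\<not> g t0 \<le> 1"
    then have "{t\<in>{0<..<1}. g t \<le> 1} \<subseteq> {t0<..<1}" using dec t0 by (auto simp: not_le) (meson le_less_trans not_le)
    then have "emeasure lebesgue {t\<in>{0<..<1}. g t \<le> 1} \<le> emeasure lebesgue {t0<..<1}"
      by (intro emeasure_mono) auto
    also have "\<dots> = ennreal (1 - t0)" using t0 by (simp add: emeasure_Ioo_leb)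
    finally have A: "emeasure lebesgue {t\<in>{0<..<1}. f t \<le> 1} \<le> ennreal (1 - t0)" using eq by simp
    have "{t\<in>{0<..<1}. f t \<le> 1} = {0<..<1}" using fb by auto
    then have "ennreal 1 \<le> ennreal (1 - t0)" using A by (simp add: emeasure_Ioo_leb)
    then show False using t0 by (simp add: ennreal_le_iff)
  qed
  moreover have "0 \<le> g t0"
  proof (rule ccontr)
    assume ng: "\<not> 0 \<le> g t0"
    have "{t0..<1} \<subseteq> {t\<in>{0<..<1}. g t \<le> g t0}" using dec t0 by auto
    then have "emeasure lebesgue {t0..<1} \<le> emeasure lebesgue {t\<in>{0<..<1}. g t \<le> g t0}"
      by (intro emeasure_mono gmeas)
    also have "\<dots> = emeasure lebesgue {t\<in>{0<..<1}. f t \<le> g t0}" by (rule eq)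
    also have "{t\<in>{0<..<1}. f t \<le> g t0} = {}" using fb ng by (force simp: not_le)
    finally have "ennreal (1 - t0) \<le> 0" using t0 by (simp add: emeasure_Ico_leb)
    then show False using t0 by simp
  qed
  ultimately show ?thesis by simp
qed

lemma rearr_integrable:
  assumes R: "is_decr_rearr f g" and fb: "\<And>t. t \<in> {0<..<1} \<Longrightarrow> 0 \<le> f t \<and> f t \<le> 1"
  shows "g integrable_on {0..1}"
proof -
  have dec: "\<And>s t. 0 < s \<Longrightarrow> s \<le> t \<Longrightarrow> t < 1 \<Longrightarrow> g t \<le> g s"
    using R unfolding is_decr_rearr_def by auto
  have gb: "\<And>t. t \<in> {0<..<1} \<Longrightarrow> 0 \<le> g t \<and> g t \<le> 1" using rearr_bounds[OF R fb] by blast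
  define g1 where "g1 t = (if t \<le> 0 then -1 else if 1 \<le> t then 0 else - g t)" for t
  have "mono_on {0..1} g1"
    unfolding mono_on_def g1_def using dec gb by (auto simp: not_le)
  then have "g1 integrable_on {0..1}" by (rule integrable_on_mono_on)
  then have "(\<lambda>t. - g1 t) integrable_on {0..1}" by (rule integrable_neg)
  then show ?thesis
    by (rule integrable_spike[OF _ neg01]) (auto simp: g1_def)
qed

lemma rearr_goodd:
  assumes R: "is_decr_rearr f g" and fb: "\<And>t. t \<in> {0<..<1} \<Longrightarrow> 0 \<le> f t \<and> f t \<le> 1"
  shows "goodd g"
  unfolding goodd_def goodb_def
proof (intro conjI ballI)
  show "g integrable_on {0..1}" by (rule rearr_integrable[OF R fb])
  fix t :: real assume "t \<in> {0<..<1}" then show "0 \<le> g t" "g t \<le> 1" using rearr_bounds[OF R fb] by auto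
next
  have dec: "\<And>s t. 0 < s \<Longrightarrow> s \<le> t \<Longrightarrow> t < 1 \<Longrightarrow> g t \<le> g s"
    using R unfolding is_decr_rearr_def by auto
  show "\<exists>Z. negligible Z \<and> (\<forall>x y. x \<in> {0<..<1} - Z \<longrightarrow> y \<in> {0<..<1} - Z \<longrightarrow> x < y \<longrightarrow> g y \<le> g x)"
    using dec by (intro exI[of _ "{}"]) auto
qed

lemma goodb_meas_open:
  assumes "goodb f" shows "f \<in> borel_measurable (lebesgue_on {0<..<1})"
proof -
  have "f integrable_on {0<..<1}" using assms by (simp add: goodb_def integrable_on_open_interval_real)
  then show ?thesis by (rule integrable_imp_measurable)
qed

lemma rearr_exists:
  assumes fb: "goodb f" shows "\<exists>g. is_decr_rearr f g"
proof -
  let ?P = "lebesgue_on {0<..<1::real}"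
  have Psets: "{0<..<1::real} \<inter> space lebesgue \<in> sets lebesgue" by simp
  have PS: "prob_space ?P" by (rule prob_space_restrict_space) (simp_all add: emeasure_Ioo_leb)
  interpret P: prob_space ?P by (rule PS)
  have fm: "f \<in> borel_measurable ?P" by (rule goodb_meas_open[OF fb])
  have fbd: "0 \<le> f t \<and> f t \<le> 1" if "t \<in> {0<..<1}" for t using fb that by (simp add: goodb_def)
  have spP: "space ?P = {0<..<1}" by simp
  define S where "S y = {t\<in>{0<..<1}. y < f t}" for y
  have Ssets: "S y \<in> P.events" for y
  proof -
    have "f -` {y<..} \<inter> space ?P \<in> P.events" by (rule measurable_sets[OF fm]) auto
    moreover have "f -` {y<..} \<inter> space ?P = S y" unfolding S_def by auto
    ultimately show ?thesis by simp
  qed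
  define m where "m y = P.prob (S y)" for y
  have m_mono: "m y' \<le> m y" if "y \<le> y'" for y y'
    unfolding m_def by (rule P.finite_measure_mono[OF _ Ssets]) (use that in \<open>auto simp: S_def\<close>)
  have m_neg: "m y = 1" if "y < 0" for y
  proof -
    have "S y = space ?P" unfolding S_def spP using fbd that by force
    then show ?thesis unfolding m_def using P.prob_space by simp
  qed
  have m_top: "m y = 0" if "1 \<le> y" for y
  proof -
    have "S y = {}" unfolding S_def using fbd that by force
    then show ?thesis unfolding m_def by simp
  qed
  have m_ge0: "0 \<le> m y" for y unfolding m_def by simp
  have m_le1: "m y \<le> 1" for y unfolding m_def by simp
  have m_rc: "m y \<le> x" if H: "\<And>n. m (y + inverse (real (Suc n))) \<le> x" for y x
  proof -
    define A where "A n = S (y + inverse (real (Suc n)))" for n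
    have "range A \<subseteq> P.events" unfolding A_def using Ssets by auto
    moreover have "incseq A" unfolding incseq_def A_def S_def
    proof (intro allI impI subsetI)
      fix a b t assume ab: "(a::nat) \<le> b" and t: "t \<in> {t \<in> {0<..<1}. y + inverse (real (Suc a)) < f t}"
      have le: "inverse (real (Suc b)) \<le> inverse (real (Suc a))" using ab by (simp add: field_simps)
      have t1: "t \<in> {0<..<1}" and t2: "y + inverse (real (Suc a)) < f t" using t by auto
      have "y + inverse (real (Suc b)) < f t" by (rule le_less_trans[OF add_left_mono[OF le] t2])
      then show "t \<in> {t \<in> {0<..<1}. y + inverse (real (Suc b)) < f t}" using t1 by simp
    qed
    ultimately have lim: "(\<lambda>n. P.prob (A n)) \<longlonglongrightarrow> P.prob (\<Union>(range A))"
      by (rule P.finite_Lim_measure_incseq)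
    have "\<Union>(range A) = S y"
    proof safe
      fix t n assume "t \<in> A n"
      then have t1: "t \<in> {0<..<1}" and t2: "y + inverse (real (Suc n)) < f t" unfolding A_def S_def by auto
      have "0 < inverse (real (Suc n))" by simp
      then have "y < f t" using t2 by linarith
      then show "t \<in> S y" using t1 unfolding S_def by simp
    next
      fix t assume t: "t \<in> S y"
      then have "0 < f t - y" unfolding S_def by auto
      then obtain n where "inverse (real (Suc n)) < f t - y" using reals_Archimedean by blast
      then have "t \<in> A n" using t unfolding A_def S_def by auto
      then show "t \<in> \<Union>(range A)" by blast
    qed
    then have "(\<lambda>n. m (y + inverse (real (Suc n)))) \<longlonglongrightarrow> m y" using lim unfolding m_def A_def by simp
    then show ?thesis by (rule LIMSEQ_le_const2) (use H in auto)
  qed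
  define g where "g x = Inf {y. m y \<le> x}" for x
  have Ane: "{y. m y \<le> x} \<noteq> {}" if "x \<in> {0<..<1}" for x
    using m_top[of 1] that by (auto intro!: exI[of _ 1])
  have Abd: "bdd_below {y. m y \<le> x}" if "x \<in> {0<..<1}" for x
  proof (rule bdd_belowI[of _ 0])
    fix y assume "y \<in> {y. m y \<le> x}"
    then show "0 \<le> y" using m_neg[of y] that by (auto simp: not_le[symmetric])
  qed
  have key: "g x \<le> y \<longleftrightarrow> m y \<le> x" if x: "x \<in> {0<..<1}" for x y
  proof
    assume "m y \<le> x" then show "g x \<le> y" unfolding g_def by (intro cInf_lower Abd[OF x]) simp
  next
    assume gy: "g x \<le> y"
    show "m y \<le> x"
    proof (rule m_rc)
      fix n
      have "Inf {y. m y \<le> x} < y + inverse (real (Suc n))" using gy unfolding g_def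
        by (smt (verit) inverse_positive_iff_positive of_nat_0_less_iff zero_less_Suc)
      then obtain y' where "m y' \<le> x" "y' < y + inverse (real (Suc n))"
        using cInf_less_iff[OF Ane[OF x] Abd[OF x]] by auto
      then show "m (y + inverse (real (Suc n))) \<le> x" using m_mono[of y' "y + inverse (real (Suc n))"] by simp
    qed
  qed
  have dec: "g t \<le> g s" if "0 < s" "s \<le> t" "t < 1" for s t
  proof -
    have "{y. m y \<le> s} \<subseteq> {y. m y \<le> t}" using that by auto
    then show ?thesis unfolding g_def using that by (intro cInf_superset_mono Ane Abd) auto
  qed
  have eqm: "emeasure lebesgue {t\<in>{0<..<1}. g t \<le> y} = emeasure lebesgue {t\<in>{0<..<1}. f t \<le> y}" for y
  proof -
    have L: "emeasure lebesgue {t\<in>{0<..<1}. g t \<le> y} = ennreal (1 - m y)"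
    proof (cases "m y = 0")
      case True
      then have "{t\<in>{0<..<1}. g t \<le> y} = {0<..<1}" using key m_ge0 by auto
      then show ?thesis using True by (simp add: emeasure_Ioo_leb)
    next
      case False
      then have mp: "0 < m y" using m_ge0[of y] by simp
      then have "{t\<in>{0<..<1}. g t \<le> y} = {m y..<1}" using key by auto
      then show ?thesis using m_le1[of y] by (simp add: emeasure_Ico_leb)
    qed
    have "{t\<in>{0<..<1}. f t \<le> y} = space ?P - S y" unfolding S_def by auto
    then have "emeasure lebesgue {t\<in>{0<..<1}. f t \<le> y} = emeasure ?P (space ?P - S y)"
      by (simp add: emeasure_restrict_space[OF Psets])
    also have "\<dots> = ennreal (P.prob (space ?P - S y))" by (simp add: P.emeasure_eq_measure)
    also have "P.prob (space ?P - S y) = 1 - m y" unfolding m_def by (rule P.prob_compl[OF Ssets])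
    finally show ?thesis using L by simp
  qed
  show ?thesis unfolding is_decr_rearr_def using dec eqm by (intro exI[of _ g]) auto
qed

lemma goodb_Gk_LINT:
  assumes h: "goodb h"
  shows "Gk h v = (LINT t|lebesgue_on {0..1}. min (h t) v)"
proof -
  have "(LINT t|lebesgue_on {0..1}. min (h t) v) = integral {0..1} (\<lambda>t. min (h t) v)"
  proof (rule HKL(2)[where C="1 + \<bar>v\<bar>"])
    show "(\<lambda>t. min (h t) v) integrable_on {0..1}" by (rule min_integrable[OF h]) auto
    fix x :: real assume "x \<in> {0<..<1}"
    then have "0 \<le> h x \<and> h x \<le> 1" using h by (simp add: goodb_def)
    then show "\<bar>min (h x) v\<bar> \<le> 1 + \<bar>v\<bar>" by (auto simp: min_def)
  qed
  then show ?thesis by (simp add: Gk_def)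
qed

lemma rearr_Gk:
  assumes R: "is_decr_rearr f g" and fb: "goodb f"
  shows "Gk g v = Gk f v"
proof -
  have fbd: "\<And>t. t \<in> {0<..<1} \<Longrightarrow> 0 \<le> f t \<and> f t \<le> 1" using fb by (simp add: goodb_def)
  have gb: "goodb g" using rearr_goodd[OF R fbd] by (simp add: goodd_def)
  let ?P = "lebesgue_on {0..1::real}"
  have Psets: "{0..1::real} \<inter> space lebesgue \<in> sets lebesgue" by simp
  have PS: "prob_space ?P" by (rule prob_space_restrict_space) (simp_all add: emeasure_lebesgue_borel)
  have hm: "h \<in> borel_measurable ?P" if "goodb h" for h
    using that by (intro integrable_imp_measurable) (simp add: goodb_def)
  have RD: "real_distribution (distr ?P borel h)" if "goodb h" for h
    unfolding real_distribution_def real_distribution_axioms_def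
    using prob_space.prob_space_distr[OF PS hm[OF that]] by simp
  have cdfh: "cdf (distr ?P borel h) y = measure lebesgue {t\<in>{0<..<1}. h t \<le> y}" if hg: "goodb h" for h y
  proof -
    let ?A = "h -` {..y} \<inter> {0..1}"
    have "cdf (distr ?P borel h) y = measure ?P (h -` {..y} \<inter> space ?P)"
      unfolding cdf_def2 by (rule measure_distr[OF hm[OF hg]]) simp
    also have "\<dots> = measure lebesgue ?A" by (simp add: measure_restrict_space[OF Psets])
    finally have c: "cdf (distr ?P borel h) y = measure lebesgue ?A" .
    have "h -` {..y} \<inter> space ?P \<in> sets ?P" by (rule measurable_sets[OF hm[OF hg]]) simp
    then have Aset: "?A \<in> sets lebesgue" using sets_restrict_space_iff[OF Psets] by simp
    let ?B = "{t\<in>{0<..<1}. h t \<le> y}"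
    have Bset: "?B \<in> sets lebesgue"
    proof -
      have e: "?B = ?A \<inter> {0<..<1}" by auto
      have o: "{0<..<1::real} \<in> sets lebesgue" by simp
      show ?thesis unfolding e using Aset o by (rule sets.Int)
    qed
    have nul: "?A \<inter> {0,1} \<in> null_sets lebesgue"
    proof -
      have "negligible (?A \<inter> {0,1})" by (rule negligible_subset[OF neg01]) auto
      then show ?thesis by (simp add: negligible_iff_null_sets)
    qed
    have "?A = ?B \<union> (?A \<inter> {0,1})" by auto
    then have "measure lebesgue ?A = measure lebesgue ?B"
      using measure_Un_null_set[OF Bset nul] by simp
    then show ?thesis using c by simp
  qed
  have eq: "emeasure lebesgue {t\<in>{0<..<1}. g t \<le> y} = emeasure lebesgue {t\<in>{0<..<1}. f t \<le> y}" for y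
    using R unfolding is_decr_rearr_def by auto
  have "cdf (distr ?P borel g) = cdf (distr ?P borel f)"
  proof
    fix y show "cdf (distr ?P borel g) y = cdf (distr ?P borel f) y"
      using cdfh[OF gb] cdfh[OF fb] eq[of y] by (simp add: measure_def)
  qed
  then have DD: "distr ?P borel g = distr ?P borel f" by (rule cdf_unique[OF RD[OF gb] RD[OF fb]])
  have "Gk g v = (LINT t|?P. min (g t) v)" by (rule goodb_Gk_LINT[OF gb])
  also have "\<dots> = (LINT x|distr ?P borel g. min x v)" by (rule integral_distr[OF hm[OF gb], symmetric]) simp
  also have "\<dots> = (LINT x|distr ?P borel f. min x v)" by (simp add: DD)
  also have "\<dots> = (LINT t|?P. min (f t) v)" by (rule integral_distr[OF hm[OF fb]]) simp
  also have "\<dots> = Gk f v" by (rule goodb_Gk_LINT[OF fb, symmetric])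
  finally show ?thesis .
qed

lemma decr_rearr_is: "goodb f \<Longrightarrow> is_decr_rearr f (decr_rearr f)"
  unfolding decr_rearr_def by (rule someI_ex[OF rearr_exists])

lemma Mk_LINT:
  assumes k: "goodb k" and s: "0 \<le> s" "s \<le> 1"
  shows "(LINT t|lebesgue_on {0..s}. k t) = Mk k s"
  unfolding Mk_def
proof (rule HKL(2)[where C=1])
  show "k integrable_on {0..s}" by (rule goodb_sub[OF k order_refl s(2)])
  fix x assume "x \<in> {0<..<s}" then show "\<bar>k x\<bar> \<le> 1" using k s by (auto simp: goodb_def)
qed

lemma Mk_0: "Mk k 0 = 0" by (simp add: Mk_def)

theorem SL:
  assumes f: "goodb f" and g: "goodb g" and T: "integral {0..1} f = integral {0..1} g"
  shows "schur_le f g \<longleftrightarrow> (\<forall>v\<in>{0..1}. Gk g v \<le> Gk f v)"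
proof -
  define F where "F = decr_rearr f"
  define G where "G = decr_rearr g"
  have RF: "is_decr_rearr f F" unfolding F_def by (rule decr_rearr_is[OF f])
  have RG: "is_decr_rearr g G" unfolding G_def by (rule decr_rearr_is[OF g])
  have fbd: "\<And>t. t \<in> {0<..<1} \<Longrightarrow> 0 \<le> f t \<and> f t \<le> 1" using f by (simp add: goodb_def)
  have gbd: "\<And>t. t \<in> {0<..<1} \<Longrightarrow> 0 \<le> g t \<and> g t \<le> 1" using g by (simp add: goodb_def)
  have dF': "goodd F" by (rule rearr_goodd[OF RF fbd])
  have dG': "goodd G" by (rule rearr_goodd[OF RG gbd])
  have bF: "goodb F" and bG: "goodb G" using dF' dG' by (auto simp: goodd_def)
  have GkF: "Gk F v = Gk f v" for v by (rule rearr_Gk[OF RF f])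
  have GkG: "Gk G v = Gk g v" for v by (rule rearr_Gk[OF RG g])
  have MF1: "Mk F 1 = integral {0..1} f"
    using Gk_1[OF bF] GkF[of 1] Gk_1[OF f] by (simp add: Mk_def)
  have MG1: "Mk G 1 = integral {0..1} g"
    using Gk_1[OF bG] GkG[of 1] Gk_1[OF g] by (simp add: Mk_def)
  have M1: "Mk F 1 = Mk G 1" using MF1 MG1 T by simp
  have "schur_le f g \<longleftrightarrow> (\<forall>v\<in>{0<..<1}. Mk F v \<le> Mk G v)"
    unfolding schur_le_def F_def[symmetric] G_def[symmetric]
    using Mk_LINT[OF bF] Mk_LINT[OF bG] M1 by auto
  also have "\<dots> \<longleftrightarrow> (\<forall>s\<in>{0..1}. Mk F s \<le> Mk G s)"
  proof
    assume H: "\<forall>v\<in>{0<..<1}. Mk F v \<le> Mk G v"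
    show "\<forall>s\<in>{0..1}. Mk F s \<le> Mk G s"
    proof
      fix s :: real assume s: "s \<in> {0..1}"
      then consider "s = 0" | "s = 1" | "s \<in> {0<..<1}" by fastforce
      then show "Mk F s \<le> Mk G s" using H M1 by cases (auto simp: Mk_0)
    qed
  qed auto
  also have "\<dots> \<longleftrightarrow> (\<forall>v\<in>{0..1}. Gk G v \<le> Gk F v)" by (rule CL[OF dF' dG' M1])
  also have "\<dots> \<longleftrightarrow> (\<forall>v\<in>{0..1}. Gk g v \<le> Gk f v)" using GkF GkG by simp
  finally show ?thesis .
qed

lemma dF_local:
  assumes S: "open S" "t \<in> S" and eq: "\<And>x. x \<in> S \<Longrightarrow> f x = g x"
  shows "dF f t = dF g t"
proof -
  have tr: "(g' has_real_derivative D) (at t)" if "(f' has_real_derivative D) (at t)" "\<And>x. x \<in> S \<Longrightarrow> f' x = g' x" for f' g' D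
    using that(1) unfolding has_field_derivative_def
    by (rule has_derivative_transform_within_open[OF _ S]) (use that(2) in auto)
  have d: "f differentiable (at t) \<longleftrightarrow> g differentiable (at t)"
    unfolding real_differentiable_def using tr eq by metis
  show ?thesis
  proof (cases "f differentiable (at t)")
    case True
    then have Df: "(f has_real_derivative deriv f t) (at t)" by (simp add: DERIV_deriv_iff_real_differentiable)
    then have "(g has_real_derivative deriv f t) (at t)" using tr eq by blast
    then have "deriv g t = deriv f t" by (rule DERIV_imp_deriv)
    then show ?thesis using True d by (simp add: dF_def)
  next
    case False then show ?thesis using d by (simp add: dF_def)
  qed
qed

definition phi :: "(real \<Rightarrow> real \<Rightarrow> real) \<Rightarrow> real \<Rightarrow> real \<Rightarrow> real" where
  "phi C u s = C u (max 0 (min 1 s))"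

lemma copula_mono_lip:
  assumes C: "copula C" and u: "u \<in> {0..1}" and ab: "0 \<le> a" "a \<le> b" "b \<le> 1"
  shows "C u a \<le> C u b" "C u b - C u a \<le> b - a"
proof -
  have bd: "\<And>x. x \<in> {0..1} \<Longrightarrow> C x 0 = 0 \<and> C 0 x = 0 \<and> C x 1 = x \<and> C 1 x = x"
    and inc: "\<And>u1 u2 v1 v2. 0 \<le> u1 \<Longrightarrow> u1 \<le> u2 \<Longrightarrow> u2 \<le> 1 \<Longrightarrow> 0 \<le> v1 \<Longrightarrow> v1 \<le> v2 \<Longrightarrow> v2 \<le> 1 \<Longrightarrow>
        C u1 v1 + C u2 v2 - C u1 v2 - C u2 v1 \<ge> 0"
    using C unfolding copula_def by auto
  have "C 0 a + C u b - C 0 b - C u a \<ge> 0" using inc[of 0 u a b] u ab by auto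
  moreover have "C 0 a = 0" "C 0 b = 0" using bd[of a] bd[of b] ab by auto
  ultimately show "C u a \<le> C u b" by simp
  have "C u a + C 1 b - C u b - C 1 a \<ge> 0" using inc[of u 1 a b] u ab by auto
  moreover have "C 1 a = a" "C 1 b = b" using bd[of a] bd[of b] ab by auto
  ultimately show "C u b - C u a \<le> b - a" by simp
qed

lemma phi_lipmono:
  assumes C: "copula C" and u: "u \<in> {0..1}" shows "lipmono (phi C u)"
  unfolding lipmono_def
proof (intro allI impI conjI)
  fix x y :: real assume xy: "x \<le> y"
  define a where "a = max 0 (min 1 x)"
  define b where "b = max 0 (min 1 y)"
  have ab: "0 \<le> a" "a \<le> b" "b \<le> 1" "b - a \<le> y - x" using xy unfolding a_def b_def by auto
  show "phi C u x \<le> phi C u y" using copula_mono_lip(1)[OF C u ab(1-3)] unfolding phi_def a_def b_def .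
  show "phi C u y - phi C u x \<le> y - x" using copula_mono_lip(2)[OF C u ab(1-3)] ab(4)
    unfolding phi_def a_def b_def by linarith
qed

lemma partial2_dF: "partial2 X u = dF (X u)"
  by (simp add: partial2_def dF_def fun_eq_iff)

lemma partial2_phi:
  assumes t: "t \<in> {0<..<1}" shows "partial2 C u t = dF (phi C u) t"
  unfolding partial2_dF
  by (rule dF_local[of "{0<..<1}"]) (use t in \<open>auto simp: phi_def\<close>)

lemma k0_goodb:
  assumes C: "copula C" and u: "u \<in> {0..1}" shows "goodb (partial2 C u)"
  unfolding goodb_def
proof (intro conjI ballI)
  have L: "lipmono (phi C u)" by (rule phi_lipmono[OF C u])
  have "dF (phi C u) integrable_on {0..1}" using lipmono_ftc[OF L zero_le_one] by blast
  then show "partial2 C u integrable_on {0..1}"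
    by (rule integrable_spike[OF _ neg01]) (auto simp: partial2_phi)
  fix t :: real assume t: "t \<in> {0<..<1}"
  show "0 \<le> partial2 C u t" "partial2 C u t \<le> 1" using dF_bounds[OF L, of t] partial2_phi[OF t] by auto
qed

lemma k0_int:
  assumes C: "copula C" and u: "u \<in> {0..1}" shows "integral {0..1} (partial2 C u) = u"
proof -
  have L: "lipmono (phi C u)" by (rule phi_lipmono[OF C u])
  have "integral {0..1} (partial2 C u) = integral {0..1} (dF (phi C u))"
    by (rule Henstock_Kurzweil_Integration.integral_spike[OF neg01]) (auto simp: partial2_phi)
  also have "\<dots> = phi C u 1 - phi C u 0" using lipmono_ftc[OF L zero_le_one] by (simp add: integral_unique)
  also have "\<dots> = u" using C u unfolding phi_def copula_def by auto
  finally show ?thesis .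
qed

lemma Pi_partial: "partial2 Pi_cop v t = v"
proof -
  have D: "((\<lambda>s. Pi_cop v s) has_real_derivative v) (at t)"
    unfolding Pi_cop_def by (auto intro!: derivative_eq_intros)
  then have "(\<lambda>s. Pi_cop v s) differentiable (at t)" using real_differentiable_def by blast
  then show ?thesis unfolding partial2_def using DERIV_imp_deriv[OF D] by simp
qed

lemma Top_Gk: assumes "goodb (partial2 C u)" shows "Top C u = Gk (partial2 C u)"
proof
  fix s
  show "Top C u s = Gk (partial2 C u) s"
    unfolding Top_def Defs.join_def Pi_partial using goodb_Gk_LINT[OF assms] by simp
qed

lemma partial2_Top: assumes "goodb (partial2 C u)" shows "partial2 (Top C) u = dF (Gk (partial2 C u))"
proof -
  have "Top C u = Gk (partial2 C u)" by (rule Top_Gk[OF assms])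
  then show ?thesis by (simp add: partial2_dF)
qed

lemma boundary_Gk:
  assumes D: "copula D" and E: "copula E" and u: "u = 0 \<or> u = 1"
  shows "Gk (partial2 D u) = Gk (partial2 E u)"
proof -
  have "phi D u = phi E u"
  proof
    fix s
    have "max 0 (min 1 s) \<in> {0..1::real}" by auto
    then show "phi D u s = phi E u s" using D E u unfolding phi_def copula_def by auto
  qed
  then have eq: "partial2 D u t = partial2 E u t" if "t \<in> {0<..<1}" for t using partial2_phi[OF that] by metis
  show ?thesis
  proof
    fix v show "Gk (partial2 D u) v = Gk (partial2 E u) v" unfolding Gk_def
      by (rule Henstock_Kurzweil_Integration.integral_spike[OF neg01]) (use eq in auto)
  qed
qed

theorem mainTheorem16:
  assumes "copula D" and "copula E"
  shows "(le_d2S D E \<longleftrightarrow> le_lo (Top E) (Top D)) \<and>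
         (le_d2S D E \<longleftrightarrow> le_d2S (Top E) (Top D)) \<and>
         (le_d2S D E \<longleftrightarrow> le_lo (Top (Top D)) (Top (Top E))) \<and>
         (le_d2S D E \<longleftrightarrow> le_d2S (Top (Top D)) (Top (Top E)))"
proof -
  note D = assms(1) and E = assms(2)
  define f0 where "f0 u = partial2 D u" for u
  define g0 where "g0 u = partial2 E u" for u
  define f1 where "f1 u = dF (Gk (f0 u))" for u
  define g1 where "g1 u = dF (Gk (g0 u))" for u
  define f2 where "f2 u = dF (Gk (f1 u))" for u
  define g2 where "g2 u = dF (Gk (g1 u))" for u
  have bf0: "goodb (f0 u)" if "u \<in> {0..1}" for u unfolding f0_def by (rule k0_goodb[OF D that])
  have bg0: "goodb (g0 u)" if "u \<in> {0..1}" for u unfolding g0_def by (rule k0_goodb[OF E that])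
  have df1: "goodd (f1 u)" if "u \<in> {0..1}" for u unfolding f1_def by (rule dGk_goodd[OF bf0[OF that]])
  have dg1: "goodd (g1 u)" if "u \<in> {0..1}" for u unfolding g1_def by (rule dGk_goodd[OF bg0[OF that]])
  have bf1: "goodb (f1 u)" if "u \<in> {0..1}" for u using df1[OF that] by (simp add: goodd_def)
  have bg1: "goodb (g1 u)" if "u \<in> {0..1}" for u using dg1[OF that] by (simp add: goodd_def)
  have df2: "goodd (f2 u)" if "u \<in> {0..1}" for u unfolding f2_def by (rule dGk_goodd[OF bf1[OF that]])
  have dg2: "goodd (g2 u)" if "u \<in> {0..1}" for u unfolding g2_def by (rule dGk_goodd[OF bg1[OF that]])
  have bf2: "goodb (f2 u)" if "u \<in> {0..1}" for u using df2[OF that] by (simp add: goodd_def)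
  have bg2: "goodb (g2 u)" if "u \<in> {0..1}" for u using dg2[OF that] by (simp add: goodd_def)
  have TopD: "Top D u = Gk (f0 u)" if "u \<in> {0..1}" for u unfolding f0_def by (rule Top_Gk[OF bf0[OF that, unfolded f0_def]])
  have TopE: "Top E u = Gk (g0 u)" if "u \<in> {0..1}" for u unfolding g0_def by (rule Top_Gk[OF bg0[OF that, unfolded g0_def]])
  have pTopD: "partial2 (Top D) u = f1 u" if "u \<in> {0..1}" for u
    unfolding f1_def f0_def by (rule partial2_Top[OF bf0[OF that, unfolded f0_def]])
  have pTopE: "partial2 (Top E) u = g1 u" if "u \<in> {0..1}" for u
    unfolding g1_def g0_def by (rule partial2_Top[OF bg0[OF that, unfolded g0_def]])
  have TopTopD: "Top (Top D) u = Gk (f1 u)" if "u \<in> {0..1}" for u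
    using Top_Gk[of "Top D" u] pTopD[OF that] bf1[OF that] by simp
  have TopTopE: "Top (Top E) u = Gk (g1 u)" if "u \<in> {0..1}" for u
    using Top_Gk[of "Top E" u] pTopE[OF that] bg1[OF that] by simp
  have pTopTopD: "partial2 (Top (Top D)) u = f2 u" if "u \<in> {0..1}" for u
    using partial2_Top[of "Top D" u] pTopD[OF that] bf1[OF that] by (simp add: f2_def)
  have pTopTopE: "partial2 (Top (Top E)) u = g2 u" if "u \<in> {0..1}" for u
    using partial2_Top[of "Top E" u] pTopE[OF that] bg1[OF that] by (simp add: g2_def)
  have If0: "integral {0..1} (f0 u) = u" if "u \<in> {0..1}" for u unfolding f0_def by (rule k0_int[OF D that])
  have Ig0: "integral {0..1} (g0 u) = u" if "u \<in> {0..1}" for u unfolding g0_def by (rule k0_int[OF E that])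
  have Mf1: "Mk (f1 u) s = Gk (f0 u) s" if "u \<in> {0..1}" "0 \<le> s" for u s
    unfolding Mk_def f1_def by (rule dGk_int[OF bf0[OF that(1)] that(2)])
  have Mg1: "Mk (g1 u) s = Gk (g0 u) s" if "u \<in> {0..1}" "0 \<le> s" for u s
    unfolding Mk_def g1_def by (rule dGk_int[OF bg0[OF that(1)] that(2)])
  have Mf2: "Mk (f2 u) s = Gk (f1 u) s" if "u \<in> {0..1}" "0 \<le> s" for u s
    unfolding Mk_def f2_def by (rule dGk_int[OF bf1[OF that(1)] that(2)])
  have Mg2: "Mk (g2 u) s = Gk (g1 u) s" if "u \<in> {0..1}" "0 \<le> s" for u s
    unfolding Mk_def g2_def by (rule dGk_int[OF bg1[OF that(1)] that(2)])
  have If1: "integral {0..1} (f1 u) = u" if "u \<in> {0..1}" for u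
    using Mf1[OF that, of 1] Gk_1[OF bf0[OF that]] If0[OF that] by (simp add: Mk_def)
  have Ig1: "integral {0..1} (g1 u) = u" if "u \<in> {0..1}" for u
    using Mg1[OF that, of 1] Gk_1[OF bg0[OF that]] Ig0[OF that] by (simp add: Mk_def)
  have If2: "integral {0..1} (f2 u) = u" if "u \<in> {0..1}" for u
    using Mf2[OF that, of 1] Gk_1[OF bf1[OF that]] If1[OF that] by (simp add: Mk_def)
  have Ig2: "integral {0..1} (g2 u) = u" if "u \<in> {0..1}" for u
    using Mg2[OF that, of 1] Gk_1[OF bg1[OF that]] Ig1[OF that] by (simp add: Mk_def)
  define A where "A u \<longleftrightarrow> (\<forall>v\<in>{0..1}. Gk (g0 u) v \<le> Gk (f0 u) v)" for u
  define B where "B u \<longleftrightarrow> (\<forall>v\<in>{0..1}. Gk (f1 u) v \<le> Gk (g1 u) v)" for u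
  have I_A: "schur_le (f0 u) (g0 u) \<longleftrightarrow> A u" if "u \<in> {0..1}" for u
    unfolding A_def by (rule SL[OF bf0[OF that] bg0[OF that]]) (simp add: If0[OF that] Ig0[OF that])
  have III_B: "schur_le (g1 u) (f1 u) \<longleftrightarrow> B u" if "u \<in> {0..1}" for u
    unfolding B_def by (rule SL[OF bg1[OF that] bf1[OF that]]) (simp add: If1[OF that] Ig1[OF that])
  have A_B: "A u \<longleftrightarrow> B u" if u: "u \<in> {0..1}" for u
  proof -
    have T: "Mk (g1 u) 1 = Mk (f1 u) 1" using Ig1[OF u] If1[OF u] by (simp add: Mk_def)
    have "(\<forall>s\<in>{0..1}. Mk (g1 u) s \<le> Mk (f1 u) s) \<longleftrightarrow> (\<forall>v\<in>{0..1}. Gk (f1 u) v \<le> Gk (g1 u) v)"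
      by (rule CL[OF dg1[OF u] df1[OF u] T])
    moreover have "(\<forall>s\<in>{0..1}. Mk (g1 u) s \<le> Mk (f1 u) s) \<longleftrightarrow> A u"
      unfolding A_def using Mf1[OF u] Mg1[OF u] by auto
    ultimately show ?thesis unfolding B_def by simp
  qed
  have V_B: "schur_le (f2 u) (g2 u) \<longleftrightarrow> B u" if u: "u \<in> {0..1}" for u
  proof -
    have "schur_le (f2 u) (g2 u) \<longleftrightarrow> (\<forall>v\<in>{0..1}. Gk (g2 u) v \<le> Gk (f2 u) v)"
      by (rule SL[OF bf2[OF u] bg2[OF u]]) (simp add: If2[OF u] Ig2[OF u])
    also have "\<dots> \<longleftrightarrow> (\<forall>s\<in>{0..1}. Mk (f2 u) s \<le> Mk (g2 u) s)"
      using CL[OF df2[OF u] dg2[OF u]] If2[OF u] Ig2[OF u] by (simp add: Mk_def)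
    also have "\<dots> \<longleftrightarrow> B u" unfolding B_def using Mf2[OF u] Mg2[OF u] by auto
    finally show ?thesis .
  qed
  have bdry0: "Gk (f0 u) = Gk (g0 u)" if "u = 0 \<or> u = 1" for u
    unfolding f0_def g0_def by (rule boundary_Gk[OF D E that])
  have bdry1: "Gk (f1 u) = Gk (g1 u)" if "u = 0 \<or> u = 1" for u
    unfolding f1_def g1_def using bdry0[OF that] by simp
  have bA: "A u" if "u = 0 \<or> u = 1" for u unfolding A_def using bdry0[OF that] by simp
  have bB: "B u" if "u = 0 \<or> u = 1" for u unfolding B_def using bdry1[OF that] by simp
  have split01: "u \<in> {0<..<1} \<or> u = 0 \<or> u = 1" if "u \<in> {0..1}" for u :: real using that by auto
  have S1: "le_d2S D E \<longleftrightarrow> (\<forall>u\<in>{0<..<1}. A u)"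
    unfolding le_d2S_def using I_A unfolding f0_def g0_def by auto
  have S2: "le_lo (Top E) (Top D) \<longleftrightarrow> (\<forall>u\<in>{0<..<1}. A u)"
  proof -
    have "le_lo (Top E) (Top D) \<longleftrightarrow> (\<forall>u\<in>{0..1}. A u)"
      unfolding le_lo_def A_def using TopD TopE by auto
    also have "\<dots> \<longleftrightarrow> (\<forall>u\<in>{0<..<1}. A u)"
    proof
      assume H: "\<forall>u\<in>{0<..<1}. A u"
      show "\<forall>u\<in>{0..1}. A u"
      proof
        fix u :: real assume u: "u \<in> {0..1}"
        show "A u" using split01[OF u] bA H by blast
      qed
    qed auto
    finally show ?thesis .
  qed
  have S3: "le_d2S (Top E) (Top D) \<longleftrightarrow> (\<forall>u\<in>{0<..<1}. B u)"
    unfolding le_d2S_def using III_B pTopD pTopE by auto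
  have S4: "le_lo (Top (Top D)) (Top (Top E)) \<longleftrightarrow> (\<forall>u\<in>{0<..<1}. B u)"
  proof -
    have "le_lo (Top (Top D)) (Top (Top E)) \<longleftrightarrow> (\<forall>u\<in>{0..1}. B u)"
      unfolding le_lo_def B_def using TopTopD TopTopE by auto
    also have "\<dots> \<longleftrightarrow> (\<forall>u\<in>{0<..<1}. B u)"
    proof
      assume H: "\<forall>u\<in>{0<..<1}. B u"
      show "\<forall>u\<in>{0..1}. B u"
      proof
        fix u :: real assume u: "u \<in> {0..1}"
        show "B u" using split01[OF u] bB H by blast
      qed
    qed auto
    finally show ?thesis .
  qed
  have S5: "le_d2S (Top (Top D)) (Top (Top E)) \<longleftrightarrow> (\<forall>u\<in>{0<..<1}. B u)"
    unfolding le_d2S_def using V_B pTopTopD pTopTopE by auto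
  have AB: "(\<forall>u\<in>{0<..<1}. A u) \<longleftrightarrow> (\<forall>u\<in>{0<..<1}. B u)" using A_B by auto
  show ?thesis using S1 S2 S3 S4 S5 AB by simp
qed

end
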